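(* The preparametrised space $\mathbb R_i=(\mathbb R,\xi_{\mathbb R_i},\mu_{\mathbb R_i})$ of interval reals is a parametrised space, i.e. the parameter $\mu_{\mathbb R_i}$ is well defined on $\mathrm{dom}(\xi_{\mathbb R_i})$ and the identity map $\mathbb R_i\to\mathbb R_i$ is computable in polynomial time.
   Context: Fix a finite non-empty alphabet $\Sigma$ and Baire space $\mathcal B=\Sigma^{*\Sigma^*}$. Oracle machines $M^?$ query an oracle $\varphi\in\mathcal B$ (a query costs one step); $M^\varphi(\mathbf a)$ is the output, $\mathrm{Time}_{M^?}(\varphi,\mathbf a)$ the step count. Second-order polynomials: smallest class of functions $\mathbb N^{\mathbb N}\times\mathbb N\to\mathbb N$ containing $(l,n)\mapsto p(n)$ for $p\in\mathbb N[X]$, closed under $P\mapsto((l,n)\mapsto l(P(l,n)))$, pointwise sum and product. For a set $X$ with partial surjection $\xi\colon\subseteq\mathcal B\to X$ and $\mu\colon\mathrm{dom}(\xi)\to\mathbb N^{\mathbb N}$ with non-decreasing values, $(X,\xi,\mu)$ is a preparametrised space; a map $f\colon X\to Y$ between such spaces is computable in polynomial time if some oracle machine $M^?$ and second-order polynomials $P,Q$ satisfy for all $\varphi\in\mathrm{dom}(\xi_X)$: $M^\varphi$ is total with $\xi_Y(M^\varphi)=f(\xi_X(\varphi))$, $\mathrm{Time}_{M^?}(\varphi,\mathbf a)\le P(\mu_X(\varphi),|\mathbf a|)$ and $\mu_Y(M^\varphi)(n)\le Q(\mu_X(\varphi),n)$. A parametrised space is a preparametrised space whose identity is computable in polynomial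 time. Encodings: integers in binary with a sign bit; dyadic rationals $\mathbb D=\{r/2^n: r\in\mathbb Z,n\in\mathbb N\}$ by their finite binary expansion; a natural number $n$ given as input is supplied as the code of the integer $2^n$; pairs of strings via a fixed pairing function. $\mathrm I\mathbb D$ is the set of finite dyadic intervals $[r\pm\varepsilon]=[r-\varepsilon,r+\varepsilon]$ ($r,\varepsilon\in\mathbb D$, encoded as the pair of codes of $r$ and $\varepsilon$) together with $[-\infty,\infty]$; $\mathrm{diam}([r\pm\varepsilon])=2\varepsilon$. A function $\varphi\colon\mathbb N\to\mathrm I\mathbb D$ stands for any string function mapping the code of $2^n$ to a code of $\varphi(n)$. Interval reals: $\varphi\colon\mathbb N\to\mathrm I\mathbb D$ is a $\xi_{\mathbb R_i}$-name of $x\in\mathbb R$ iff $(\varphi(n))_n$ is nested with $\bigcap_n\varphi(n)=\{x\}$, and $\mu_{\mathbb R_i}(\varphi)(n)=\min\{N\mid\mathrm{diam}(\varphi(N))\le2^{-n}\}+\lceil\mathrm{lb}(|x|+1)\rceil$, where $\mathrm{lb}$ is the binary logarithm. *)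

theory Defs
  imports Complex_Main "HOL-Computational_Algebra.Polynomial"
begin

text \<open>Multi-tape oracle Turing machine over the alphabet bool (blank = None).
  Tapes: 0 input, 1 query, 2 oracle answer, 3 output, plus otm_extra work tapes.
  States are natural numbers below otm_nstates; state 0 is the start state,
  1 the halting state, 2 the query state, 3 the state entered after a query.
  A query (being in state 2) costs one step: the string on the query tape is
  replaced on the answer tape by the oracle answer, head at cell 0.\<close>

datatype dir = DL | DN | DR

type_synonym tape = "(nat \<Rightarrow> bool option) \<times> nat"

datatype otm = OTM
  (otm_nstates: nat)
  (otm_extra: nat)
  (otm_delta: "nat \<Rightarrow> bool option list \<Rightarrow> nat \<times> bool option list \<times> dir list")

definition otm_wf :: "otm \<Rightarrow> bool" where
  "otm_wf M \<longleftrightarrow> 4 \<le> otm_nstates M \<and>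
     (\<forall>q s. q < otm_nstates M \<longrightarrow> fst (otm_delta M q s) < otm_nstates M)"

definition string_tape :: "bool list \<Rightarrow> tape" where
  "string_tape w = ((\<lambda>i. if i < length w then Some (w ! i) else None), 0)"

definition blank_tape :: tape where
  "blank_tape = ((\<lambda>_. None), 0)"

definition tape_contents :: "tape \<Rightarrow> bool list" where
  "tape_contents t = map (\<lambda>i. the (fst t i)) [0..<(LEAST i. fst t i = None)]"

definition tape_read :: "tape \<Rightarrow> bool option" where
  "tape_read t = fst t (snd t)"

definition tape_write_move :: "tape \<Rightarrow> bool option \<Rightarrow> dir \<Rightarrow> tape" where
  "tape_write_move t s d = ((fst t)(snd t := s),
     (case d of DL \<Rightarrow> snd t - 1 | DN \<Rightarrow> snd t | DR \<Rightarrow> snd t + 1))"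

definition otm_step :: "(bool list \<Rightarrow> bool list) \<Rightarrow> otm \<Rightarrow> nat \<times> tape list \<Rightarrow> nat \<times> tape list" where
  "otm_step \<phi> M c = (let q = fst c; ts = snd c in
     if q = 1 then c
     else if q = 2 then (3, ts[2 := string_tape (\<phi> (tape_contents (ts ! 1)))])
     else (case otm_delta M q (map tape_read ts) of (q', ws, ds) \<Rightarrow>
       (q', map (\<lambda>i. if i < length ws \<and> i < length ds
                     then tape_write_move (ts ! i) (ws ! i) (ds ! i) else ts ! i)
              [0..<length ts])))"

definition otm_init :: "otm \<Rightarrow> bool list \<Rightarrow> nat \<times> tape list" where
  "otm_init M a = (0, string_tape a # replicate (3 + otm_extra M) blank_tape)"

definition otm_run :: "(bool list \<Rightarrow> bool list) \<Rightarrow> otm \<Rightarrow> bool list \<Rightarrow> nat \<Rightarrow> nat \<times> tape list" where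
  "otm_run \<phi> M a t = (otm_step \<phi> M ^^ t) (otm_init M a)"

definition otm_halts_within :: "(bool list \<Rightarrow> bool list) \<Rightarrow> otm \<Rightarrow> bool list \<Rightarrow> nat \<Rightarrow> bool" where
  "otm_halts_within \<phi> M a t \<longleftrightarrow> fst (otm_run \<phi> M a t) = 1"

definition otm_total :: "(bool list \<Rightarrow> bool list) \<Rightarrow> otm \<Rightarrow> bool" where
  "otm_total \<phi> M \<longleftrightarrow> (\<forall>a. \<exists>t. otm_halts_within \<phi> M a t)"

definition otm_time :: "(bool list \<Rightarrow> bool list) \<Rightarrow> otm \<Rightarrow> bool list \<Rightarrow> nat" where
  "otm_time \<phi> M a = (LEAST t. otm_halts_within \<phi> M a t)"

definition otm_out :: "(bool list \<Rightarrow> bool list) \<Rightarrow> otm \<Rightarrow> bool list \<Rightarrow> bool list" where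
  "otm_out \<phi> M a = tape_contents (snd (otm_run \<phi> M a (otm_time \<phi> M a)) ! 3)"

inductive_set sopoly :: "((nat \<Rightarrow> nat) \<Rightarrow> nat \<Rightarrow> nat) set" where
  sop_poly: "(\<lambda>l n. poly p n) \<in> sopoly"
| sop_app: "P \<in> sopoly \<Longrightarrow> (\<lambda>l n. l (P l n)) \<in> sopoly"
| sop_add: "P \<in> sopoly \<Longrightarrow> Q \<in> sopoly \<Longrightarrow> (\<lambda>l n. P l n + Q l n) \<in> sopoly"
| sop_mult: "P \<in> sopoly \<Longrightarrow> Q \<in> sopoly \<Longrightarrow> (\<lambda>l n. P l n * Q l n) \<in> sopoly"

text \<open>A preparametrised space on the type 'x is given by a domain D of the partial
  representation xi (xi is only relevant on D) and a parameter mu.\<close>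
definition preparametrised_space ::
  "(bool list \<Rightarrow> bool list) set \<Rightarrow> ((bool list \<Rightarrow> bool list) \<Rightarrow> 'x)
     \<Rightarrow> ((bool list \<Rightarrow> bool list) \<Rightarrow> nat \<Rightarrow> nat) \<Rightarrow> bool" where
  "preparametrised_space D xi mu \<longleftrightarrow> xi ` D = UNIV \<and> (\<forall>\<phi>\<in>D. mono (mu \<phi>))"

definition poly_time_computable ::
  "(bool list \<Rightarrow> bool list) set \<Rightarrow> ((bool list \<Rightarrow> bool list) \<Rightarrow> 'x)
     \<Rightarrow> ((bool list \<Rightarrow> bool list) \<Rightarrow> nat \<Rightarrow> nat)
   \<Rightarrow> (bool list \<Rightarrow> bool list) set \<Rightarrow> ((bool list \<Rightarrow> bool list) \<Rightarrow> 'y)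
     \<Rightarrow> ((bool list \<Rightarrow> bool list) \<Rightarrow> nat \<Rightarrow> nat)
   \<Rightarrow> ('x \<Rightarrow> 'y) \<Rightarrow> bool" where
  "poly_time_computable DX xiX muX DY xiY muY f \<longleftrightarrow>
     (\<exists>M P Q. otm_wf M \<and> P \<in> sopoly \<and> Q \<in> sopoly \<and>
       (\<forall>\<phi>\<in>DX. otm_total \<phi> M \<and> otm_out \<phi> M \<in> DY \<and>
          xiY (otm_out \<phi> M) = f (xiX \<phi>) \<and>
          (\<forall>a. otm_time \<phi> M a \<le> P (muX \<phi>) (length a)) \<and>
          (\<forall>n. muY (otm_out \<phi> M) n \<le> Q (muX \<phi>) n)))"

definition parametrised_space ::
  "(bool list \<Rightarrow> bool list) set \<Rightarrow> ((bool list \<Rightarrow> bool list) \<Rightarrow> 'x)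
     \<Rightarrow> ((bool list \<Rightarrow> bool list) \<Rightarrow> nat \<Rightarrow> nat) \<Rightarrow> bool" where
  "parametrised_space D xi mu \<longleftrightarrow>
     preparametrised_space D xi mu \<and> poly_time_computable D xi mu D xi mu id"

text \<open>Binary representation of a natural number, most significant bit first,
  no leading zeros (bin 0 = []).\<close>
fun bin :: "nat \<Rightarrow> bool list" where
  "bin n = (if n = 0 then [] else bin (n div 2) @ [odd n])"

text \<open>Integers: sign bit (True = negative) followed by the binary digits of |z|.\<close>
definition int_code :: "int \<Rightarrow> bool list" where
  "int_code z = (z < 0) # bin (nat \<bar>z\<bar>)"

text \<open>A natural number n given as input is the code of the integer 2^n.\<close>
definition nat_code :: "nat \<Rightarrow> bool list" where
  "nat_code n = int_code (2 ^ n)"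

text \<open>Fixed pairing function (bitwise interleaving with presence flags).\<close>
definition pair_code :: "bool list \<Rightarrow> bool list \<Rightarrow> bool list" where
  "pair_code u v = concat (map (\<lambda>i. [i < length u, i < length u \<and> u ! i,
                                     i < length v, i < length v \<and> v ! i])
                        [0..<max (length u) (length v)])"

definition dyadic :: "real \<Rightarrow> bool" where
  "dyadic d \<longleftrightarrow> (\<exists>r::int. \<exists>k::nat. d = r / 2 ^ k)"

text \<open>Fractional binary digits of a dyadic 0 \<le> d < 1 (no trailing zeros).\<close>
definition frac_bits :: "real \<Rightarrow> bool list" where
  "frac_bits d = (let k = (LEAST k::nat. \<exists>m::int. d * 2 ^ k = m);
                      m = nat \<lfloor>d * 2 ^ k\<rfloor>
                  in replicate (k - length (bin m)) False @ bin m)"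

text \<open>Dyadic rationals by their finite binary expansion: sign bit, then the pair of
  the integer-part digits and the fractional digits of |d|.\<close>
definition dyadic_code :: "real \<Rightarrow> bool list" where
  "dyadic_code d = (d < 0) # pair_code (bin (nat \<lfloor>\<bar>d\<bar>\<rfloor>)) (frac_bits (\<bar>d\<bar> - \<lfloor>\<bar>d\<bar>\<rfloor>))"

datatype ival = IFin real real | IWhole

definition ival_valid :: "ival \<Rightarrow> bool" where
  "ival_valid J = (case J of IFin r e \<Rightarrow> dyadic r \<and> dyadic e \<and> 0 \<le> e | IWhole \<Rightarrow> True)"

definition ival_set :: "ival \<Rightarrow> real set" where
  "ival_set J = (case J of IFin r e \<Rightarrow> {r - e..r + e} | IWhole \<Rightarrow> UNIV)"

text \<open>diam J \<le> t (the diameter of [-\<infinity>,\<infinity>] is infinite).\<close>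
definition ival_diam_le :: "ival \<Rightarrow> real \<Rightarrow> bool" where
  "ival_diam_le J t = (case J of IFin r e \<Rightarrow> 2 * e \<le> t | IWhole \<Rightarrow> False)"

definition ival_code :: "ival \<Rightarrow> bool list" where
  "ival_code J = (case J of IFin r e \<Rightarrow> pair_code (dyadic_code r) (dyadic_code e) | IWhole \<Rightarrow> [])"

definition ival_of :: "(bool list \<Rightarrow> bool list) \<Rightarrow> nat \<Rightarrow> ival" where
  "ival_of \<phi> n = (THE J. ival_valid J \<and> ival_code J = \<phi> (nat_code n))"

definition Ri_name :: "(bool list \<Rightarrow> bool list) \<Rightarrow> real \<Rightarrow> bool" where
  "Ri_name \<phi> x \<longleftrightarrow>
     (\<forall>n. \<exists>J. ival_valid J \<and> \<phi> (nat_code n) = ival_code J) \<and>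
     (\<forall>n. ival_set (ival_of \<phi> (Suc n)) \<subseteq> ival_set (ival_of \<phi> n)) \<and>
     (\<Inter>n. ival_set (ival_of \<phi> n)) = {x}"

definition Ri_dom :: "(bool list \<Rightarrow> bool list) set" where
  "Ri_dom = {\<phi>. \<exists>x. Ri_name \<phi> x}"

definition Ri_xi :: "(bool list \<Rightarrow> bool list) \<Rightarrow> real" where
  "Ri_xi \<phi> = (THE x. Ri_name \<phi> x)"

definition Ri_mu :: "(bool list \<Rightarrow> bool list) \<Rightarrow> nat \<Rightarrow> nat" where
  "Ri_mu \<phi> n = (LEAST N. ival_diam_le (ival_of \<phi> N) ((1/2) ^ n))
                 + nat \<lceil>log 2 (\<bar>Ri_xi \<phi>\<bar> + 1)\<rceil>"

end

theory Submission
  imports Defs "HOL-Library.Nat_Bijection"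
begin


declare bin.simps[simp del]

lemma bin_0[simp]: "bin 0 = []" by (simp add: bin.simps)
lemma bin_pos: "n > 0 \<Longrightarrow> bin n = bin (n div 2) @ [odd n]"
  by (subst bin.simps) simp

definition bv :: "bool list \<Rightarrow> nat" where
  "bv b = foldl (\<lambda>acc x. 2*acc + of_bool x) 0 b"

lemma bv_Nil[simp]: "bv [] = 0" by (simp add: bv_def)
lemma bv_snoc[simp]: "bv (xs @ [x]) = 2 * bv xs + of_bool x" by (simp add: bv_def)

lemma bv_bin[simp]: "bv (bin n) = n"
proof (induction n rule: bin.induct)
  case (1 n)
  show ?case
  proof (cases "n = 0")
    case True then show ?thesis by simp
  next
    case False
    then have "bv (bin n) = 2 * bv (bin (n div 2)) + of_bool (odd n)" by (simp add: bin_pos)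
    also have "\<dots> = n" using 1 False by simp
    finally show ?thesis .
  qed
qed

lemma bv_repl_False: "bv (replicate k False @ l) = bv l"
proof (induction l rule: rev_induct)
  case Nil
  then show ?case by (induction k) (simp_all add: replicate_append_same[symmetric] del: replicate_append_same)
next
  case (snoc x xs)
  then show ?case by (simp flip: append_assoc)
qed

lemma bin_length_le: "length (bin n) \<le> k \<longleftrightarrow> n < 2^k"
proof (induction n arbitrary: k rule: bin.induct)
  case (1 n)
  show ?case
  proof (cases "n = 0")
    case True then show ?thesis by simp
  next
    case False
    show ?thesis
    proof (cases k)
      case 0 then show ?thesis using False by (simp add: bin_pos)
    next
      case (Suc k')
      have "length (bin n) \<le> k \<longleftrightarrow> length (bin (n div 2)) \<le> k'" using False Suc by (simp add: bin_pos)
      also have "\<dots> \<longleftrightarrow> n div 2 < 2^k'" using 1 False by simp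
      also have "\<dots> \<longleftrightarrow> n < 2^k" using Suc by auto
      finally show ?thesis .
    qed
  qed
qed

lemma bin_length_gt: "n < 2^k \<Longrightarrow> length (bin n) \<le> k" using bin_length_le by blast

lemma bin_inj: "bin m = bin n \<Longrightarrow> m = n" by (metis bv_bin)

lemma bv_lt: "bv b < 2 ^ length b"
  by (induction b rule: rev_induct) auto

lemma repl_bin_bv: "b = replicate (length b - length (bin (bv b))) False @ bin (bv b)"
proof (induction b rule: rev_induct)
  case Nil then show ?case by simp
next
  case (snoc x xs)
  show ?case
  proof (cases "bv xs = 0 \<and> \<not> x")
    case True
    then have xs: "xs = replicate (length xs) False" using snoc by simp
    have "bv (xs @ [x]) = 0" using True by simp
    then have "replicate (length (xs @ [x]) - length (bin (bv (xs @ [x])))) False @ bin (bv (xs @ [x]))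
       = replicate (Suc (length xs)) False" by simp
    also have "\<dots> = xs @ [x]" using True xs by (metis replicate_Suc replicate_append_same)
    finally show ?thesis by simp
  next
    case False
    then have pos: "2 * bv xs + of_bool x > 0" by auto
    have b: "bin (2 * bv xs + of_bool x) = bin (bv xs) @ [x]"
      using pos by (subst bin_pos) auto
    have le: "length (bin (bv xs)) \<le> length xs" using bv_lt bin_length_gt by blast
    have "xs @ [x] = (replicate (length xs - length (bin (bv xs))) False @ bin (bv xs)) @ [x]"
      using snoc.IH by simp
    also have "\<dots> = replicate (length (xs@[x]) - length (bin (bv (xs@[x])))) False @ bin (bv (xs@[x]))"
      using b le by simp
    finally show ?thesis .
  qed
qed

lemma bin_pow2: "bin (2^n) = True # replicate n False"
proof (induction n)
  case 0 then show ?case by (simp add: bin_pos)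
next
  case (Suc n)
  have "bin (2^Suc n) = bin (2^n) @ [False]" by (subst bin_pos) auto
  then show ?case using Suc by (simp add: replicate_append_same[symmetric] del: replicate_append_same)
qed

lemma nat_code_eq: "nat_code n = False # True # replicate n False"
  by (simp add: nat_code_def int_code_def bin_pow2 nat_power_eq)

lemma nat_code_inj: "nat_code m = nat_code n \<Longrightarrow> m = n"
  by (simp add: nat_code_eq)

lemma length_nat_code: "length (nat_code n) = n + 2" by (simp add: nat_code_eq)

definition fval :: "bool list \<Rightarrow> real" where
  "fval b = (\<Sum>j<length b. if b!j then 1/2^(Suc j) else 0)"

lemma fval_Nil[simp]: "fval [] = 0" by (simp add: fval_def)

lemma fval_snoc[simp]: "fval (xs @ [x]) = fval xs + (if x then 1/2^(Suc (length xs)) else 0)"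
  unfolding fval_def by (simp add: nth_append)

lemma bv_fval: "real (bv b) / 2 ^ length b = fval b"
proof (induction b rule: rev_induct)
  case Nil then show ?case by simp
next
  case (snoc x xs)
  have "real (bv (xs @ [x])) / 2 ^ length (xs @ [x]) = real (bv xs) / 2 ^ length xs + of_bool x / 2^Suc (length xs)"
    by (simp add: field_simps)
  then show ?case using snoc by simp
qed

lemma fval_nonneg: "fval b \<ge> 0" unfolding fval_def by (rule sum_nonneg) auto

lemma fval_lt1: "fval b < 1"
proof -
  have "fval b = real (bv b) / 2 ^ length b" by (simp add: bv_fval)
  also have "\<dots> < 1" using bv_lt[of b]
    by (simp add: divide_less_eq)
  finally show ?thesis .
qed

lemma frac_bits_val:
  assumes "dyadic d" "0 \<le> d" "d < 1"
  shows "fval (frac_bits d) = d"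
proof -
  obtain r :: int and k :: nat where rk: "d = r / 2^k" using assms(1) unfolding dyadic_def by blast
  have ex: "\<exists>k::nat. \<exists>m::int. d * 2 ^ k = m" using rk by (intro exI[of _ k] exI[of _ r]) simp
  define k0 where "k0 = (LEAST k::nat. \<exists>m::int. d * 2 ^ k = m)"
  obtain m :: int where m: "d * 2 ^ k0 = m" using LeastI_ex[OF ex] unfolding k0_def by blast
  have m0: "m \<ge> 0" using m assms(2) by (metis of_int_0_le_iff zero_le_numeral zero_le_power mult_nonneg_nonneg)
  have mlt: "m < 2 ^ k0"
  proof -
    have "real_of_int m < 2 ^ k0" using m assms(3) by (simp add: flip: m)
    then show ?thesis by (metis of_int_less_iff of_int_numeral of_int_power)
  qed
  define mn where "mn = nat m"
  have mnr: "real mn = d * 2^k0" using m m0 unfolding mn_def by simp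
  have mnlt: "mn < 2 ^ k0" using mlt m0 unfolding mn_def
    by (metis nat_less_iff of_nat_numeral of_nat_power)
  have fl: "nat \<lfloor>d * 2 ^ k0\<rfloor> = mn" using m unfolding mn_def by simp
  have fb: "frac_bits d = replicate (k0 - length (bin mn)) False @ bin mn"
    unfolding frac_bits_def Let_def k0_def[symmetric] fl ..
  have len: "length (frac_bits d) = k0" using fb bin_length_gt[OF mnlt] by simp
  have bvf: "bv (frac_bits d) = mn" using fb by (simp add: bv_repl_False)
  have "fval (frac_bits d) = real mn / 2 ^ k0" using bv_fval[of "frac_bits d"] len bvf by simp
  also have "\<dots> = d" using mnr by simp
  finally show ?thesis .
qed

lemma bv_odd: "b \<noteq> [] \<Longrightarrow> last b \<Longrightarrow> odd (bv b)"
  by (induction b rule: rev_induct) auto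

lemma frac_bits_fval:
  assumes "b = [] \<or> last b"
  shows "frac_bits (fval b) = b"
proof -
  define n where "n = length b"
  define m where "m = bv b"
  have d: "fval b = real m / 2 ^ n" using bv_fval[of b] unfolding m_def n_def by simp
  have least: "(LEAST k::nat. \<exists>i::int. fval b * 2 ^ k = i) = n"
  proof (rule Least_equality)
    show "\<exists>i::int. fval b * 2 ^ n = i" using d by (intro exI[of _ "int m"]) simp
  next
    fix k :: nat assume "\<exists>i::int. fval b * 2 ^ k = i"
    then obtain i :: int where i: "fval b * 2 ^ k = i" by blast
    show "n \<le> k"
    proof (rule ccontr)
      assume "\<not> n \<le> k"
      then have kn: "k < n" by simp
      then have bne: "b \<noteq> []" unfolding n_def by auto
      then have odd: "odd m" using assms bv_odd unfolding m_def by auto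
      have "real m = real m / 2^n * 2^k * 2^(n-k)" using kn
        by (simp add: field_simps flip: power_add)
      also have "\<dots> = of_int i * 2^(n-k)" using i d by simp
      finally have "int m = i * 2^(n-k)" by (metis of_int_eq_iff of_int_mult of_int_numeral of_int_of_nat_eq of_int_power)
      then have "even (int m)" using kn by simp
      then show False using odd by simp
    qed
  qed
  have fl: "nat \<lfloor>fval b * 2 ^ n\<rfloor> = m" using d by simp
  show ?thesis unfolding frac_bits_def Let_def least fl
    using repl_bin_bv[of b] unfolding m_def n_def by simp
qed

definition bitl :: "bool list \<Rightarrow> nat \<Rightarrow> bool" where
  "bitl w p \<longleftrightarrow> p < length w \<and> w ! p"

lemma bit_Cons0[simp]: "bitl (x # l) 0 = x" by (simp add: bitl_def)
lemma bit_ConsS[simp]: "bitl (x # l) (Suc p) = bitl l p" by (simp add: bitl_def)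

lemma concat_map4_nth:
  assumes "\<And>j. length (f j) = 4" "i < n" "t < 4"
  shows "concat (map f [0..<n]) ! (4*i+t) = f i ! t"
  using assms(2)
proof (induction n)
  case 0 then show ?case by simp
next
  case (Suc n)
  have len: "length (concat (map f [0..<n])) = 4 * n" using assms(1)
    by (induction n) simp_all
  show ?case
  proof (cases "i < n")
    case True
    then have "4*i+t < 4*n" using assms(3) by simp
    then show ?thesis using Suc True len by (simp add: nth_append)
  next
    case False
    then have "i = n" using Suc by simp
    then show ?thesis using len assms by (simp add: nth_append)
  qed
qed

lemma length_pair_code: "length (pair_code u v) = 4 * max (length u) (length v)"
proof -
  have "length (concat (map (\<lambda>i. [i < length u, i < length u \<and> u ! i,
                                     i < length v, i < length v \<and> v ! i]) [0..<n])) = 4 * n" for n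
    by (induction n) simp_all
  then show ?thesis unfolding pair_code_def by simp
qed

lemma pair_code_nth:
  assumes "i < max (length u) (length v)" "t < 4"
  shows "pair_code u v ! (4*i+t) = [i < length u, bitl u i, i < length v, bitl v i] ! t"
  unfolding pair_code_def bitl_def by (subst concat_map4_nth) (use assms in auto)

lemma bit_pair_code:
  "bitl (pair_code u v) (4*i) = (i < length u)"
  "bitl (pair_code u v) (4*i+1) = bitl u i"
  "bitl (pair_code u v) (4*i+2) = (i < length v)"
  "bitl (pair_code u v) (4*i+3) = bitl v i"
proof -
  have A: "bitl (pair_code u v) (4*i+t) = (if i < max (length u) (length v) then [i < length u, bitl u i, i < length v, bitl v i] ! t else False)"
    if "t < 4" for t
    using pair_code_nth[of i u v t] that unfolding bitl_def length_pair_code by auto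
  show "bitl (pair_code u v) (4*i) = (i < length u)" using A[of 0] by (auto simp: bitl_def)
  show "bitl (pair_code u v) (4*i+1) = bitl u i" using A[of 1] by (auto simp: bitl_def)
  show "bitl (pair_code u v) (4*i+2) = (i < length v)" using A[of 2] by (auto simp: bitl_def)
  show "bitl (pair_code u v) (4*i+3) = bitl v i" using A[of 3] by (auto simp: bitl_def)
qed

lemma list_eq_bit:
  assumes "\<And>i. i < length u \<longleftrightarrow> i < length v" "\<And>i. bitl u i = bitl v i"
  shows "u = v"
proof -
  have l: "length u = length v" using assms(1) by (metis less_irrefl nat_neq_iff)
  show ?thesis by (rule nth_equalityI) (use l assms(2) in \<open>auto simp: bitl_def\<close>)
qed

lemma pair_code_inj:
  assumes "pair_code u v = pair_code u' v'"
  shows "u = u'" "v = v'"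
proof -
  show "u = u'"
    by (rule list_eq_bit) (metis assms bit_pair_code(1), metis assms bit_pair_code(2))
  show "v = v'"
    by (rule list_eq_bit) (metis assms bit_pair_code(3), metis assms bit_pair_code(4))
qed

lemma dyadic_frac: "dyadic d \<Longrightarrow> dyadic (\<bar>d\<bar> - of_int \<lfloor>\<bar>d\<bar>\<rfloor>)"
proof -
  assume "dyadic d"
  then obtain r :: int and k :: nat where rk: "d = r / 2^k" unfolding dyadic_def by blast
  have a: "\<bar>d\<bar> = of_int \<bar>r\<bar> / 2^k" using rk by (simp add: abs_divide)
  have "\<bar>d\<bar> - of_int \<lfloor>\<bar>d\<bar>\<rfloor> = of_int (\<bar>r\<bar> - \<lfloor>\<bar>d\<bar>\<rfloor> * 2^k) / 2^k"
    unfolding a by (simp add: field_simps)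
  then show ?thesis unfolding dyadic_def by blast
qed

abbreviation ibits :: "real \<Rightarrow> bool list" where
  "ibits d \<equiv> bin (nat \<lfloor>\<bar>d\<bar>\<rfloor>)"
abbreviation fbits :: "real \<Rightarrow> bool list" where
  "fbits d \<equiv> frac_bits (\<bar>d\<bar> - of_int \<lfloor>\<bar>d\<bar>\<rfloor>)"

lemma dc_eq: "dyadic_code d = (d < 0) # pair_code (ibits d) (fbits d)"
  by (simp add: dyadic_code_def)

lemma dc_abs_val: "dyadic d \<Longrightarrow> \<bar>d\<bar> = real (nat \<lfloor>\<bar>d\<bar>\<rfloor>) + fval (fbits d)"
proof -
  assume dy: "dyadic d"
  have a: "0 \<le> \<bar>d\<bar> - of_int \<lfloor>\<bar>d\<bar>\<rfloor>" "\<bar>d\<bar> - of_int \<lfloor>\<bar>d\<bar>\<rfloor> < 1"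
    by linarith+
  have "fval (fbits d) = \<bar>d\<bar> - of_int \<lfloor>\<bar>d\<bar>\<rfloor>" using frac_bits_val[OF dyadic_frac[OF dy] a] .
  moreover have "real (nat \<lfloor>\<bar>d\<bar>\<rfloor>) = of_int \<lfloor>\<bar>d\<bar>\<rfloor>" by simp
  ultimately show ?thesis by simp
qed

lemma dc_inj:
  assumes "dyadic d" "dyadic d'" "dyadic_code d = dyadic_code d'"
  shows "d = d'"
proof -
  have s: "(d < 0) = (d' < 0)" and p: "pair_code (ibits d) (fbits d) = pair_code (ibits d') (fbits d')"
    using assms(3) by (simp_all add: dc_eq)
  have "nat \<lfloor>\<bar>d\<bar>\<rfloor> = nat \<lfloor>\<bar>d'\<bar>\<rfloor>" using pair_code_inj(1)[OF p] bin_inj by blast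
  moreover have "fbits d = fbits d'" using pair_code_inj(2)[OF p] .
  ultimately have "\<bar>d\<bar> = \<bar>d'\<bar>" using dc_abs_val[OF assms(1)] dc_abs_val[OF assms(2)] by simp
  then show ?thesis using s by (cases "d < 0"; cases "d' < 0") auto
qed

lemma length_pair_code_ge: "u \<noteq> [] \<Longrightarrow> length (pair_code u v) \<ge> 4"
  by (cases u) (auto simp: length_pair_code)

lemma ival_code_inj:
  assumes "ival_valid J" "ival_valid J'" "ival_code J = ival_code J'"
  shows "J = J'"
proof (cases J)
  case (IFin r e)
  show ?thesis
  proof (cases J')
    case (IFin r' e')
    have "pair_code (dyadic_code r) (dyadic_code e) = pair_code (dyadic_code r') (dyadic_code e')"
      using assms(3) \<open>J = IFin r e\<close> IFin by (simp add: ival_code_def)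
    then have "dyadic_code r = dyadic_code r'" "dyadic_code e = dyadic_code e'" using pair_code_inj by blast+
    then show ?thesis using assms(1,2) \<open>J = IFin r e\<close> IFin dc_inj by (auto simp: ival_valid_def)
  next
    case IWhole
    then show ?thesis using assms(3) \<open>J = IFin r e\<close> length_pair_code_ge[of "dyadic_code r" "dyadic_code e"]
      by (auto simp: ival_code_def dyadic_code_def)
  qed
next
  case IWhole
  then show ?thesis
  proof (cases J')
    case (IFin r' e')
    then show ?thesis using assms(3) IWhole length_pair_code_ge[of "dyadic_code r'" "dyadic_code e'"]
      by (auto simp: ival_code_def dyadic_code_def)
  qed simp
qed

lemma ival_of_eq: "ival_valid J \<Longrightarrow> \<phi> (nat_code n) = ival_code J \<Longrightarrow> ival_of \<phi> n = J"
  unfolding ival_of_def by (rule the_equality) (auto intro: ival_code_inj)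

lemma fval_append: "fval (xs @ ys) = fval xs + fval ys / 2 ^ length xs"
proof (induction ys rule: rev_induct)
  case Nil then show ?case by simp
next
  case (snoc y ys)
  then show ?case by (simp add: field_simps power_add flip: append_assoc)
qed

lemma fval_repl_False[simp]: "fval (replicate n False) = 0"
  by (induction n) (simp_all add: replicate_append_same[symmetric] del: replicate_append_same)

lemma fval_take: "fval (take k b) \<le> fval b \<and> fval b < fval (take k b) + 1 / 2^k"
proof (cases "k \<le> length b")
  case True
  have "fval b = fval (take k b) + fval (drop k b) / 2^k"
    using fval_append[of "take k b" "drop k b"] True by simp
  then show ?thesis using fval_nonneg[of "drop k b"] fval_lt1[of "drop k b"] by (simp add: divide_strict_right_mono)
next
  case False
  then show ?thesis by simp
qed

lemma fval_ge_bit: "bitl b j \<Longrightarrow> fval b \<ge> 1 / 2^(Suc j)"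
  unfolding fval_def bitl_def
  by (rule order_trans[OF _ member_le_sum[of j]]) auto

lemma take_False: "(\<forall>j<k. \<not> bitl b j) \<Longrightarrow> take k b = replicate (min k (length b)) False"
  by (rule nth_equalityI) (auto simp: bitl_def)

lemma fval_small: "(\<forall>j<k. \<not> bitl b j) \<Longrightarrow> fval b < 1 / 2^k"
  using fval_take[of k b] take_False[of k b] by simp

lemma small_bits:
  assumes "0 \<le> e" "e < 1 / 2^k" "dyadic e"
  shows "ibits e = [] \<and> (\<forall>j<k. \<not> bitl (fbits e) j)"
proof -
  have "(1::real)/2^k \<le> 1" by simp
  then have e1: "e < 1" using assms(2) by linarith
  then have fl: "\<lfloor>\<bar>e\<bar>\<rfloor> = 0" using assms(1) by (simp add: floor_eq_iff)
  then have ib: "ibits e = []" by simp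
  have fv: "fval (fbits e) = e" using dc_abs_val[OF assms(3)] fl assms(1) by simp
  have "\<not> bitl (fbits e) j" if "j < k" for j
  proof
    assume "bitl (fbits e) j"
    then have "fval (fbits e) \<ge> 1/2^Suc j" by (rule fval_ge_bit)
    moreover have "(1::real)/2^k \<le> 1/2^Suc j"
    proof (rule divide_left_mono)
      show "(2::real)^Suc j \<le> 2^k" using that by (intro power_increasing) auto
    qed auto
    ultimately show False using fv assms(2) by simp
  qed
  then show ?thesis using ib by blast
qed

lemma bits_small:
  assumes "0 \<le> e" "dyadic e" "ibits e = []" "\<forall>j<k. \<not> bitl (fbits e) j"
  shows "e < 1 / 2^k"
proof -
  have "nat \<lfloor>\<bar>e\<bar>\<rfloor> = 0" using assms(3) by (metis bv_bin bv_Nil)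
  then have "e = fval (fbits e)" using dc_abs_val[OF assms(2)] assms(1) by simp
  then show ?thesis using fval_small[OF assms(4)] by simp
qed


datatype st = Init | Halt | Query | Disp | Init2 | Copy | Rew | Inc | Flag
  | O0 | O1 | O2F | O2T | O3 | O4
  | T nat | BL nat nat | R nat bool bool bool bool bool nat | W nat bool bool bool bool bool nat

definition bc :: "bool \<Rightarrow> bool \<Rightarrow> bool \<Rightarrow> bool \<Rightarrow> bool \<Rightarrow> nat" where
  "bc p i f a b = of_bool p + 2 * of_bool i + 4 * of_bool f + 8 * of_bool a + 16 * of_bool b"

lemma bc_inj: "bc p i f a b = bc p' i' f' a' b' \<Longrightarrow> p = p' \<and> i = i' \<and> f = f' \<and> a = a' \<and> b = b'"
  unfolding bc_def by (cases p; cases i; cases f; cases a; cases b; cases p'; cases i'; cases f'; cases a'; cases b'; simp)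

fun enc :: "st \<Rightarrow> nat" where
  "enc Init = 0" | "enc Halt = 1" | "enc Query = 2" | "enc Disp = 3" | "enc Init2 = 4" | "enc Copy = 5"
| "enc Rew = 6" | "enc Inc = 7" | "enc Flag = 8" | "enc O0 = 9" | "enc O1 = 10" | "enc O2F = 11" | "enc O2T = 12"
| "enc O3 = 13" | "enc O4 = 14"
| "enc (T k) = 16 + 4 * k"
| "enc (BL k x) = 17 + 4 * prod_encode (k, x)"
| "enc (R k p i f a b x) = 18 + 4 * prod_encode (k, prod_encode (bc p i f a b, x))"
| "enc (W k p i f a b x) = 19 + 4 * prod_encode (k, prod_encode (bc p i f a b, x))"

lemma enc_inj: "inj enc"
proof (rule injI)
  fix s1 s2 assume "enc s1 = enc s2"
  then show "s1 = s2"
    by (cases s1; cases s2; simp; presburger?; auto dest: bc_inj)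
qed

declare enc.simps[simp del]

definition nop :: "dir list" where "nop = [DN,DN,DN,DN,DN]"

definition wval :: "nat \<Rightarrow> bool \<Rightarrow> bool \<Rightarrow> bool \<Rightarrow> bool \<Rightarrow> bool \<Rightarrow> nat \<Rightarrow> bool" where
  "wval k p i f a b x = [p \<or> x \<le> 4, p, a, False, p \<or> x \<le> 4, i, a, False,
     p \<or> x \<le> 4, x \<le> 4, a, a, p \<or> x \<le> 4, (x \<le> 3 \<and> f) \<or> x = 4, a, a \<and> \<not> b] ! k"

fun mtrans :: "st \<Rightarrow> bool option list \<Rightarrow> st \<times> bool option list \<times> dir list" where
  "mtrans Init s = (Init2, s[1 := Some False, 4 := Some False], nop[1 := DR, 4 := DR])"
| "mtrans Init2 s = (Copy, s[1 := Some True], nop[1 := DR])"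
| "mtrans Copy s = (if s!0 \<noteq> None then (Copy, s[4 := Some True], nop[0 := DR, 4 := DR]) else (Rew, s, nop))"
| "mtrans Rew s = (if s!4 = Some False then (Query, s, nop) else (Rew, s, nop[4 := DL]))"
| "mtrans Inc s = (Rew, s[1 := Some False], nop[1 := DR])"
| "mtrans Flag s = (Rew, s[3 := Some True], nop)"
| "mtrans Disp s = (if s!3 = Some True then (O0, s, nop) else (T 0, s, nop))"
| "mtrans (T k) s = (if k = 0 then (if s!2 = Some True then (T 1, s, nop[2:=DR]) else (Inc, s, nop))
     else if k = 7 then (if s!2 = Some True then (Inc, s, nop) else (T 8, s, nop[2:=DR]))
     else if k < 15 then (T (k+1), s, nop[2:=DR])
     else (BL 0 0, s, nop[2:=DR, 4:=DR]))"
| "mtrans (BL k x) s = (if k = 0 then (let x' = (if s!4 = Some True then min x 5 else min 5 (x+1)) in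
        if 4 \<le> x' then (Flag, s, nop) else (BL 1 x', s, nop[2:=DR]))
     else if k = 3 then (if s!2 = Some True then (Inc, s, nop) else (BL 4 (min x 5), s, nop[2:=DR]))
     else if k < 15 then (BL (k+1) (min x 5), s, nop[2:=DR])
     else (BL 0 (min x 5), s, nop[2:=DR, 4:=DR]))"
| "mtrans O0 s = (O1, s, nop[2:=DR])"
| "mtrans O1 s = ((if s!2 = Some True then O2T else O2F), s[3 := Some True], nop[2:=DR, 3:=DR])"
| "mtrans O2F s = (O3, s[3 := Some False], nop[2:=DR, 3:=DR])"
| "mtrans O2T s = (O3, s[3 := Some True], nop[2:=DR, 3:=DR])"
| "mtrans O3 s = (O4, s[3 := Some True], nop[2:=DR, 3:=DR])"
| "mtrans O4 s = (R 0 False False False False False 0, s[3 := Some False], nop[3:=DR, 4:=DR])"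
| "mtrans (R k p i f a b x) s = (if k = 0 then (let a' = (s!4 = Some True) in
       (R 1 p i f a' b (if a' then min x 5 else min 5 (x+1)), s, nop[2:=DR, 4:=DR]))
     else if k = 1 then (R 2 (s!2 = Some True) i f a (s!4 = Some True) (min x 5), s, nop[2:=DR])
     else if k = 5 then (R 6 p (s!2 = Some True) f a b (min x 5), s, nop[2:=DR])
     else if k = 13 then (R 14 p i (s!2 = Some True) a b (min x 5), s, nop[2:=DR])
     else if k < 15 then (R (k+1) p i f a b (min x 5), s, nop[2:=DR])
     else if \<not> p \<and> 5 \<le> x then (Halt, s, nop)
     else (W 0 p i f a b (min x 5), s, nop[2:=DR]))"
| "mtrans (W k p i f a b x) s = ((if k < 15 then W (k+1) p i f a b (min x 5) else R 0 False False False False False (min x 5)),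
      s[3 := Some (wval k p i f a b x)], nop[3:=DR])"
| "mtrans Halt s = (Halt, s, nop)"
| "mtrans Query s = (Query, s, nop)"

lemma trans_len: "length s = 5 \<Longrightarrow> length (fst (snd (mtrans st s))) = 5 \<and> length (snd (snd (mtrans st s))) = 5"
  by (cases st) (auto simp: nop_def Let_def)

definition NS :: nat where "NS = 2000000"

definition delta :: "nat \<Rightarrow> bool option list \<Rightarrow> nat \<times> bool option list \<times> dir list" where
  "delta q s = (case mtrans (inv enc q) s of (st', ws, ds) \<Rightarrow> (if enc st' < NS then enc st' else 0, ws, ds))"

definition Mc :: otm where "Mc = OTM NS 1 delta"

lemma Mc_wf: "otm_wf Mc"
  unfolding otm_wf_def Mc_def delta_def NS_def by (auto split: prod.splits)

fun bnd :: "st \<Rightarrow> bool" where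
  "bnd (T k) = (k \<le> 15)"
| "bnd (BL k x) = (k \<le> 15 \<and> x \<le> 5)"
| "bnd (R k p i f a b x) = (k \<le> 15 \<and> x \<le> 5)"
| "bnd (W k p i f a b x) = (k \<le> 15 \<and> x \<le> 5)"
| "bnd _ = True"

lemma triangle_mono: "m \<le> n \<Longrightarrow> triangle m \<le> triangle n"
  unfolding triangle_def by (intro div_le_mono mult_le_mono) auto

lemma pe_mono: "a \<le> a' \<Longrightarrow> b \<le> b' \<Longrightarrow> prod_encode (a, b) \<le> prod_encode (a', b')"
  unfolding prod_encode_def using triangle_mono[of "a+b" "a'+b'"] by simp

lemma bc_le: "bc p i f a b \<le> 31" unfolding bc_def by (cases p; cases i; cases f; cases a; cases b; simp)

lemma enc_bnd: "bnd st \<Longrightarrow> enc st < NS"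
proof (cases st)
  case (BL k x)
  assume "bnd st"
  then have "prod_encode (k, x) \<le> prod_encode (15, 5)" using BL by (intro pe_mono) auto
  also have "\<dots> = 225" by (simp add: prod_encode_def triangle_def)
  finally show ?thesis using BL by (simp add: NS_def enc.simps)
next
  case (R k p i f a b x)
  assume "bnd st"
  then have "prod_encode (bc p i f a b, x) \<le> prod_encode (31, 5)" using R bc_le by (intro pe_mono) auto
  also have "\<dots> = 697" by (simp add: prod_encode_def triangle_def)
  finally have "prod_encode (k, prod_encode (bc p i f a b, x)) \<le> prod_encode (15, 697)"
    using R \<open>bnd st\<close> by (intro pe_mono) auto
  also have "\<dots> = 253843" by (simp add: prod_encode_def triangle_def)
  finally show ?thesis using R by (simp add: NS_def enc.simps)
next
  case (W k p i f a b x)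
  assume "bnd st"
  then have "prod_encode (bc p i f a b, x) \<le> prod_encode (31, 5)" using W bc_le by (intro pe_mono) auto
  also have "\<dots> = 697" by (simp add: prod_encode_def triangle_def)
  finally have "prod_encode (k, prod_encode (bc p i f a b, x)) \<le> prod_encode (15, 697)"
    using W \<open>bnd st\<close> by (intro pe_mono) auto
  also have "\<dots> = 253843" by (simp add: prod_encode_def triangle_def)
  finally show ?thesis using W by (simp add: NS_def enc.simps)
qed (auto simp: NS_def enc.simps)

definition encC :: "st \<Rightarrow> nat" where "encC st = (if enc st < NS then enc st else 0)"

lemma encC_bnd[simp]: "bnd st \<Longrightarrow> encC st = enc st" using enc_bnd by (simp add: encC_def)

lemma enc_eq_iff[simp]: "enc s1 = enc s2 \<longleftrightarrow> s1 = s2" using enc_inj by (auto dest: injD)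

lemma enc_1: "enc st = 1 \<longleftrightarrow> st = Halt" using enc_eq_iff[of st Halt] by (simp add: enc.simps)
lemma enc_2: "enc st = 2 \<longleftrightarrow> st = Query" using enc_eq_iff[of st Query] by (simp add: enc.simps)

lemma upt5: "[0..<5] = [0::nat,1,2,3,4]" by (simp add: upt_rec)

lemma step_simp:
  assumes "st \<noteq> Halt" "st \<noteq> Query"
  shows "otm_step \<phi> Mc (enc st, [t0,t1,t2,t3,t4]) =
    (case mtrans st [tape_read t0, tape_read t1, tape_read t2, tape_read t3, tape_read t4] of (st', ws, ds) \<Rightarrow>
      (encC st', [tape_write_move t0 (ws!0) (ds!0), tape_write_move t1 (ws!1) (ds!1),
        tape_write_move t2 (ws!2) (ds!2), tape_write_move t3 (ws!3) (ds!3), tape_write_move t4 (ws!4) (ds!4)]))"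
proof -
  obtain st' ws ds where tr: "mtrans st [tape_read t0, tape_read t1, tape_read t2, tape_read t3, tape_read t4] = (st', ws, ds)"
    by (metis prod_cases3)
  have l: "length ws = 5" "length ds = 5" using trans_len[of "[tape_read t0, tape_read t1, tape_read t2, tape_read t3, tape_read t4]" st] tr by auto
  have "enc st \<noteq> 1" "enc st \<noteq> 2" using assms enc_1 enc_2 by auto
  moreover have "ws \<noteq> []" "ds \<noteq> []" using l by auto
  ultimately show ?thesis using tr l
    by (simp add: otm_step_def Mc_def delta_def inj_on_def upt5 encC_def Let_def eval_nat_numeral)
qed

lemma step_query: "otm_step \<phi> Mc (enc Query, [t0,t1,t2,t3,t4]) = (enc Disp, [t0,t1,string_tape (\<phi> (tape_contents t1)),t3,t4])"
  by (simp add: otm_step_def enc.simps)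

lemma step_halt: "otm_step \<phi> Mc (enc Halt, ts) = (enc Halt, ts)"
  by (simp add: otm_step_def enc.simps)

lemma tape_read_pair[simp]: "tape_read (f, h) = f h" by (simp add: tape_read_def)
lemma twm_pair[simp]: "tape_write_move (f, h) w DN = (f(h := w), h)"
  "tape_write_move (f, h) w DR = (f(h := w), Suc h)"
  "tape_write_move (f, h) w DL = (f(h := w), h - 1)"
  by (simp_all add: tape_write_move_def)

lemma nop_simps[simp]: "nop ! 0 = DN" "nop ! 1 = DN" "nop ! 2 = DN" "nop ! 3 = DN" "nop ! 4 = DN"
  "length nop = 5" by (simp_all add: nop_def)

lemma twm_keep[simp]: "tape_write_move t (tape_read t) DN = t"
  by (cases t) (simp add: tape_write_move_def tape_read_def)

definition reach :: "(bool list \<Rightarrow> bool list) \<Rightarrow> nat \<times> tape list \<Rightarrow> nat \<times> tape list \<Rightarrow> nat \<Rightarrow> bool" where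
  "reach \<phi> c c' n \<longleftrightarrow> (\<exists>t\<le>n. (otm_step \<phi> Mc ^^ t) c = c')"

lemma reach_refl: "reach \<phi> c c n" unfolding reach_def by (intro exI[of _ 0]) simp

lemma reach_step: "otm_step \<phi> Mc c = c' \<Longrightarrow> reach \<phi> c' c'' n \<Longrightarrow> reach \<phi> c c'' (Suc n)"
  unfolding reach_def
proof -
  assume a: "otm_step \<phi> Mc c = c'" and "\<exists>t\<le>n. (otm_step \<phi> Mc ^^ t) c' = c''"
  then obtain t where t: "t \<le> n" "(otm_step \<phi> Mc ^^ t) c' = c''" by blast
  have "(otm_step \<phi> Mc ^^ Suc t) c = c''" using a t by (simp only: funpow_Suc_right comp_def)
  then show "\<exists>t\<le>Suc n. (otm_step \<phi> Mc ^^ t) c = c''" using t by (intro exI[of _ "Suc t"]) simp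
qed

lemma reach_trans: "reach \<phi> c c' a \<Longrightarrow> reach \<phi> c' c'' b \<Longrightarrow> reach \<phi> c c'' (a + b)"
  unfolding reach_def
proof -
  assume "\<exists>t\<le>a. (otm_step \<phi> Mc ^^ t) c = c'" "\<exists>t\<le>b. (otm_step \<phi> Mc ^^ t) c' = c''"
  then obtain t1 t2 where t: "t1 \<le> a" "(otm_step \<phi> Mc ^^ t1) c = c'" "t2 \<le> b" "(otm_step \<phi> Mc ^^ t2) c' = c''" by blast
  have "(otm_step \<phi> Mc ^^ (t2 + t1)) c = c''" using t by (simp add: funpow_add)
  then show "\<exists>t\<le>a + b. (otm_step \<phi> Mc ^^ t) c = c''" using t by (intro exI[of _ "t2+t1"]) simp
qed

lemma reach_mono: "reach \<phi> c c' a \<Longrightarrow> a \<le> b \<Longrightarrow> reach \<phi> c c' b"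
  unfolding reach_def using le_trans by blast

lemma reach_trans2: "reach \<phi> c c' a \<Longrightarrow> reach \<phi> c' c'' b \<Longrightarrow> a + b \<le> n \<Longrightarrow> reach \<phi> c c'' n"
  by (rule reach_mono[OF reach_trans])

lemma reach_stepn: "otm_step \<phi> Mc c = c' \<Longrightarrow> reach \<phi> c' c'' b \<Longrightarrow> Suc b \<le> n \<Longrightarrow> reach \<phi> c c'' n"
  by (rule reach_mono[OF reach_step])

lemma reach_step1: "otm_step \<phi> Mc c = c' \<Longrightarrow> 1 \<le> n \<Longrightarrow> reach \<phi> c c' n"
  by (rule reach_stepn[OF _ reach_refl[of _ _ 0]]) simp_all

definition af :: "bool list \<Rightarrow> nat \<Rightarrow> bool option" where
  "af w = (\<lambda>p. if p < length w then Some (w ! p) else None)"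

lemma string_tape_af: "string_tape w = (af w, 0)" by (simp add: string_tape_def af_def)

lemma tape_contents_af: "tape_contents (af w, h) = w"
proof -
  have "(LEAST i. af w i = None) = length w"
    by (rule Least_equality) (auto simp: af_def split: if_splits)
  then show ?thesis unfolding tape_contents_def
    by (simp add: af_def) (rule nth_equalityI; simp)
qed

definition cf :: "nat \<Rightarrow> nat \<Rightarrow> bool option" where
  "cf L = (\<lambda>p. if p = 0 then Some False else if p \<le> L then Some True else None)"

declare fun_upd_idem[simp]

lemma af_None[simp]: "length w \<le> p \<Longrightarrow> af w p = None" by (simp add: af_def)
lemma af_Some: "p < length w \<Longrightarrow> af w p = Some (w ! p)" by (simp add: af_def)
lemma af_True[simp]: "(af w p = Some True) = bitl w p" by (simp add: af_def bitl_def)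
lemma af_not_None[simp]: "(af w p \<noteq> None) = (p < length w)" by (simp add: af_def)
lemma af_ex_Some[simp]: "(\<exists>y. af w p = Some y) = (p < length w)" by (simp add: af_def)
lemma cf_0[simp]: "cf L 0 = Some False" by (simp add: cf_def)
lemma cf_Suc_val[simp]: "cf L (Suc p) = (if Suc p \<le> L then Some True else None)" by (simp add: cf_def)

definition qt :: "nat \<Rightarrow> tape" where "qt m = (af (nat_code m), m + 2)"

lemma qt_inc: "((af (nat_code m))(m+2 := Some False), Suc (m+2)) = qt (Suc m)"
  unfolding qt_def by (auto simp: af_def nat_code_eq nth_Cons' nth_append replicate_append_same[symmetric] simp del: replicate_append_same)

lemma cf_Suc: "(cf i)(Suc i := Some True) = cf (Suc i)"
  by (auto simp: cf_def)

lemma copy_loop: "i \<le> length a \<Longrightarrow>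
  reach \<phi> (enc Copy, [(af a, i), t1, t2, t3, (cf i, Suc i)]) (enc Rew, [(af a, length a), t1, t2, t3, (cf (length a), Suc (length a))]) (length a - i + 1)"
proof (induction "length a - i" arbitrary: i)
  case 0
  then have i: "i = length a" by simp
  show ?case unfolding i
    by (rule reach_step1) (simp_all add: step_simp nop_def)
next
  case (Suc n)
  then have il: "i < length a" by simp
  have "otm_step \<phi> Mc (enc Copy, [(af a, i), t1, t2, t3, (cf i, Suc i)]) = (enc Copy, [(af a, Suc i), t1, t2, t3, (cf (Suc i), Suc (Suc i))])"
    using il by (simp add: step_simp nop_def cf_Suc)
  moreover have "reach \<phi> (enc Copy, [(af a, Suc i), t1, t2, t3, (cf (Suc i), Suc (Suc i))]) (enc Rew, [(af a, length a), t1, t2, t3, (cf (length a), Suc (length a))]) (length a - Suc i + 1)"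
    using Suc il by simp
  ultimately show ?case using il reach_step by (metis Suc_diff_Suc add_Suc)
qed

lemma rew_loop: "reach \<phi> (enc Rew, [t0, t1, t2, t3, (cf L, p)]) (enc Query, [t0, t1, t2, t3, (cf L, 0)]) (p + 1)"
proof (induction p)
  case 0
  show ?case by (rule reach_step1) (simp_all add: step_simp nop_def)
next
  case (Suc p)
  have "otm_step \<phi> Mc (enc Rew, [t0, t1, t2, t3, (cf L, Suc p)]) = (enc Rew, [t0, t1, t2, t3, (cf L, p)])"
    by (simp add: step_simp nop_def)
  then show ?case using Suc reach_step by fastforce
qed

lemma ph_init: "reach \<phi> (enc Init, [string_tape a, blank_tape, blank_tape, blank_tape, blank_tape])
   (enc Query, [(af a, length a), qt 0, blank_tape, blank_tape, (cf (length a), 0)]) (2 * length a + 5)"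
proof -
  have s1: "otm_step \<phi> Mc (enc Init, [string_tape a, blank_tape, blank_tape, blank_tape, blank_tape]) =
     (enc Init2, [(af a, 0), ((\<lambda>_. None)(0 := Some False), 1), blank_tape, blank_tape, (cf 0, 1)])"
  proof -
    have "(\<lambda>_. None)(0 := Some False) = cf 0" by (auto simp: cf_def fun_eq_iff)
    then show ?thesis by (simp add: step_simp nop_def string_tape_af blank_tape_def)
  qed
  have s2: "otm_step \<phi> Mc (enc Init2, [(af a, 0), ((\<lambda>_. None)(0 := Some False), 1), blank_tape, blank_tape, (cf 0, 1)]) =
     (enc Copy, [(af a, 0), qt 0, blank_tape, blank_tape, (cf 0, 1)])"
  proof -
    have "af (nat_code 0) = ((\<lambda>_. None)(0 := Some False))(1 := Some True)"
      by (auto simp: af_def nat_code_eq fun_eq_iff nth_Cons' less_Suc_eq)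
    then show ?thesis by (simp add: step_simp nop_def qt_def)
  qed
  have "reach \<phi> (enc Copy, [(af a, 0), qt 0, blank_tape, blank_tape, (cf 0, 1)])
     (enc Rew, [(af a, length a), qt 0, blank_tape, blank_tape, (cf (length a), Suc (length a))]) (length a + 1)"
    using copy_loop[of 0 a \<phi>] by simp
  moreover have "reach \<phi> (enc Rew, [(af a, length a), qt 0, blank_tape, blank_tape, (cf (length a), Suc (length a))])
     (enc Query, [(af a, length a), qt 0, blank_tape, blank_tape, (cf (length a), 0)]) (Suc (length a) + 1)"
    by (rule rew_loop)
  ultimately have "reach \<phi> (enc Copy, [(af a, 0), qt 0, blank_tape, blank_tape, (cf 0, 1)])
     (enc Query, [(af a, length a), qt 0, blank_tape, blank_tape, (cf (length a), 0)]) (2 * length a + 3)"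
    by (rule reach_trans2) simp
  then show ?thesis using s1 s2 by (intro reach_stepn[OF s1] reach_stepn[OF s2]) auto
qed


lemma cf_pos[simp]: "0 < p \<Longrightarrow> cf L p = (if p \<le> L then Some True else None)"
  by (cases p) auto

definition test_ok :: "bool list \<Rightarrow> nat \<Rightarrow> bool" where
  "test_ok w L \<longleftrightarrow> bitl w 0 \<and> \<not> bitl w 7 \<and> (\<forall>b. 1 \<le> b \<and> b \<le> L+3 \<longrightarrow> \<not> bitl w (16*b+3))"

lemma T_adv: "k1 \<le> k2 \<Longrightarrow> k2 \<le> 15 \<Longrightarrow> (\<forall>k. k1 \<le> k \<and> k < k2 \<longrightarrow> k \<noteq> 0 \<and> k \<noteq> 7) \<Longrightarrow>
  reach \<phi> (enc (T k1), [t0,t1,(f,h),t3,t4]) (enc (T k2), [t0,t1,(f,h + (k2-k1)),t3,t4]) (k2 - k1)"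
proof (induction "k2 - k1" arbitrary: k1 h)
  case 0 then show ?case using reach_refl by simp
next
  case (Suc n)
  then have k: "k1 < k2" "k1 \<noteq> 0" "k1 \<noteq> 7" "k1 < 15" by auto
  have s: "otm_step \<phi> Mc (enc (T k1), [t0,t1,(f,h),t3,t4]) = (enc (T (Suc k1)), [t0,t1,(f,Suc h),t3,t4])"
    using k by (simp add: step_simp nop_def)
  have "reach \<phi> (enc (T (Suc k1)), [t0,t1,(f,Suc h),t3,t4]) (enc (T k2), [t0,t1,(f,Suc h + (k2-Suc k1)),t3,t4]) (k2 - Suc k1)"
    using Suc k by (intro Suc.hyps) auto
  moreover have eq: "Suc h + (k2 - Suc k1) = h + (k2 - k1)" using k by simp
  ultimately show ?case using k by (intro reach_stepn[OF s]) auto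
qed

lemma BL_adv: "k1 \<le> k2 \<Longrightarrow> k2 \<le> 15 \<Longrightarrow> x \<le> 5 \<Longrightarrow> (\<forall>k. k1 \<le> k \<and> k < k2 \<longrightarrow> k \<noteq> 0 \<and> k \<noteq> 3) \<Longrightarrow>
  reach \<phi> (enc (BL k1 x), [t0,t1,(f,h),t3,t4]) (enc (BL k2 x), [t0,t1,(f,h + (k2-k1)),t3,t4]) (k2 - k1)"
proof (induction "k2 - k1" arbitrary: k1 h)
  case 0 then show ?case using reach_refl by simp
next
  case (Suc n)
  then have k: "k1 < k2" "k1 \<noteq> 0" "k1 \<noteq> 3" "k1 < 15" by auto
  have s: "otm_step \<phi> Mc (enc (BL k1 x), [t0,t1,(f,h),t3,t4]) = (enc (BL (Suc k1) x), [t0,t1,(f,Suc h),t3,t4])"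
    using k Suc.prems by (simp add: step_simp nop_def Let_def)
  have "reach \<phi> (enc (BL (Suc k1) x), [t0,t1,(f,Suc h),t3,t4]) (enc (BL k2 x), [t0,t1,(f,Suc h + (k2-Suc k1)),t3,t4]) (k2 - Suc k1)"
    using Suc k by (intro Suc.hyps) auto
  moreover have eq: "Suc h + (k2 - Suc k1) = h + (k2 - k1)" using k by simp
  ultimately show ?case using k by (intro reach_stepn[OF s]) auto
qed

lemma BL_adv': "k1 \<le> k2 \<Longrightarrow> k2 \<le> 15 \<Longrightarrow> x \<le> 5 \<Longrightarrow> (\<forall>k. k1 \<le> k \<and> k < k2 \<longrightarrow> k \<noteq> 0 \<and> k \<noteq> 3) \<Longrightarrow>
  h' = h + (k2 - k1) \<Longrightarrow> n = k2 - k1 \<Longrightarrow>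
  reach \<phi> (enc (BL k1 x), [t0,t1,(f,h),t3,t4]) (enc (BL k2 x), [t0,t1,(f,h'),t3,t4]) n"
  using BL_adv[of k1 k2 x] by simp

lemma T_adv': "k1 \<le> k2 \<Longrightarrow> k2 \<le> 15 \<Longrightarrow> (\<forall>k. k1 \<le> k \<and> k < k2 \<longrightarrow> k \<noteq> 0 \<and> k \<noteq> 7) \<Longrightarrow>
  h' = h + (k2 - k1) \<Longrightarrow> n = k2 - k1 \<Longrightarrow>
  reach \<phi> (enc (T k1), [t0,t1,(f,h),t3,t4]) (enc (T k2), [t0,t1,(f,h'),t3,t4]) n"
  using T_adv[of k1 k2] by simp

lemma bl_loop:
  assumes "1 \<le> b" "b \<le> L+4"
  shows "\<exists>h p. p \<le> L+4 \<and> reach \<phi> (enc (BL 0 ((b-1)-L)), [t0,t1,(af w,16*b),t3,(cf L,b)])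
    (enc (if (\<forall>b'. b \<le> b' \<and> b' \<le> L+3 \<longrightarrow> \<not> bitl w (16*b'+3)) then Flag else Inc), [t0,t1,(af w,h),t3,(cf L,p)]) (16*(L+5-b))"
  using assms
proof (induction "L+4-b" arbitrary: b)
  case 0
  then have b: "b = L+4" by simp
  have s: "otm_step \<phi> Mc (enc (BL 0 ((b-1)-L)), [t0,t1,(af w,16*b),t3,(cf L,b)]) = (enc Flag, [t0,t1,(af w,16*b),t3,(cf L,b)])"
    using b by (simp add: step_simp nop_def Let_def)
  have c: "(\<forall>b'. b \<le> b' \<and> b' \<le> L+3 \<longrightarrow> \<not> bitl w (16*b'+3))" using b by auto
  have e: "(if (\<forall>b'. b \<le> b' \<and> b' \<le> L+3 \<longrightarrow> \<not> bitl w (16*b'+3)) then Flag else Inc) = Flag" using c by simp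
  show ?case unfolding e using b by (intro exI[of _ "16*b"] exI[of _ b] conjI reach_step1[OF s]) auto
next
  case (Suc n)
  define x' where "x' = b - L"
  have bL: "b < L+4" using Suc by simp
  have x'4: "x' < 4" using bL x'_def by simp
  have s1: "otm_step \<phi> Mc (enc (BL 0 ((b-1)-L)), [t0,t1,(af w,16*b),t3,(cf L,b)]) = (enc (BL 1 x'), [t0,t1,(af w,Suc (16*b)),t3,(cf L,b)])"
  proof -
    obtain b0 where b0: "b = Suc b0" using Suc.prems by (cases b) auto
    show ?thesis using bL x'4 unfolding b0 x'_def by (simp add: step_simp nop_def Let_def; arith)
  qed
  have r2: "reach \<phi> (enc (BL 1 x'), [t0,t1,(af w,Suc (16*b)),t3,(cf L,b)]) (enc (BL 3 x'), [t0,t1,(af w,16*b+3),t3,(cf L,b)]) 2"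
    by (rule BL_adv') (use x'4 in simp_all)
  show ?case
  proof (cases "bitl w (16*b+3)")
    case True
    have s3: "otm_step \<phi> Mc (enc (BL 3 x'), [t0,t1,(af w,16*b+3),t3,(cf L,b)]) = (enc Inc, [t0,t1,(af w,16*b+3),t3,(cf L,b)])"
      using True x'4 by (simp add: step_simp nop_def)
    have c: "\<not> (\<forall>b'. b \<le> b' \<and> b' \<le> L+3 \<longrightarrow> \<not> bitl w (16*b'+3))" using True bL by auto
    have r3: "reach \<phi> (enc (BL 3 x'), [t0,t1,(af w,16*b+3),t3,(cf L,b)]) (enc Inc, [t0,t1,(af w,16*b+3),t3,(cf L,b)]) 1"
      by (rule reach_step1[OF s3]) simp
    have r23: "reach \<phi> (enc (BL 1 x'), [t0,t1,(af w,Suc (16*b)),t3,(cf L,b)]) (enc Inc, [t0,t1,(af w,16*b+3),t3,(cf L,b)]) 3"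
      by (rule reach_trans2[OF r2 r3]) simp
    have r4: "reach \<phi> (enc (BL 0 ((b-1)-L)), [t0,t1,(af w,16*b),t3,(cf L,b)]) (enc Inc, [t0,t1,(af w,16*b+3),t3,(cf L,b)]) 4"
      by (rule reach_stepn[OF s1 r23]) simp
    have r: "reach \<phi> (enc (BL 0 ((b-1)-L)), [t0,t1,(af w,16*b),t3,(cf L,b)]) (enc Inc, [t0,t1,(af w,16*b+3),t3,(cf L,b)]) (16*(L+5-b))"
      by (rule reach_mono[OF r4]) (use bL in simp)
    have e: "(if (\<forall>b'. b \<le> b' \<and> b' \<le> L+3 \<longrightarrow> \<not> bitl w (16*b'+3)) then Flag else Inc) = Inc" using c by simp
    show ?thesis unfolding e using r bL by (intro exI[of _ "16*b+3"] exI[of _ b] conjI) simp_all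
  next
    case False
    have s3: "otm_step \<phi> Mc (enc (BL 3 x'), [t0,t1,(af w,16*b+3),t3,(cf L,b)]) = (enc (BL 4 x'), [t0,t1,(af w,16*b+4),t3,(cf L,b)])"
      using False x'4 by (simp add: step_simp nop_def)
    have r4: "reach \<phi> (enc (BL 4 x'), [t0,t1,(af w,16*b+4),t3,(cf L,b)]) (enc (BL 15 x'), [t0,t1,(af w,16*b+15),t3,(cf L,b)]) 11"
      by (rule BL_adv') (use x'4 in simp_all)
    have s15: "otm_step \<phi> Mc (enc (BL 15 x'), [t0,t1,(af w,16*b+15),t3,(cf L,b)]) = (enc (BL 0 ((Suc b - 1) - L)), [t0,t1,(af w,16*Suc b),t3,(cf L,Suc b)])"
      using x'4 unfolding x'_def by (simp add: step_simp nop_def)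
    have r16: "reach \<phi> (enc (BL 0 ((b-1)-L)), [t0,t1,(af w,16*b),t3,(cf L,b)]) (enc (BL 0 ((Suc b - 1) - L)), [t0,t1,(af w,16*Suc b),t3,(cf L,Suc b)]) 16"
    proof -
      have a: "reach \<phi> (enc (BL 15 x'), [t0,t1,(af w,16*b+15),t3,(cf L,b)]) (enc (BL 0 ((Suc b - 1) - L)), [t0,t1,(af w,16*Suc b),t3,(cf L,Suc b)]) 1"
        by (rule reach_step1[OF s15]) simp
      have b: "reach \<phi> (enc (BL 4 x'), [t0,t1,(af w,16*b+4),t3,(cf L,b)]) (enc (BL 0 ((Suc b - 1) - L)), [t0,t1,(af w,16*Suc b),t3,(cf L,Suc b)]) 12"
        by (rule reach_trans2[OF r4 a]) simp
      have c: "reach \<phi> (enc (BL 3 x'), [t0,t1,(af w,16*b+3),t3,(cf L,b)]) (enc (BL 0 ((Suc b - 1) - L)), [t0,t1,(af w,16*Suc b),t3,(cf L,Suc b)]) 13"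
        by (rule reach_stepn[OF s3 b]) simp
      have d: "reach \<phi> (enc (BL 1 x'), [t0,t1,(af w,Suc (16*b)),t3,(cf L,b)]) (enc (BL 0 ((Suc b - 1) - L)), [t0,t1,(af w,16*Suc b),t3,(cf L,Suc b)]) 15"
        by (rule reach_trans2[OF r2 c]) simp
      show ?thesis by (rule reach_stepn[OF s1 d]) simp
    qed
    obtain h p where hp: "p \<le> L+4" "reach \<phi> (enc (BL 0 ((Suc b-1)-L)), [t0,t1,(af w,16*Suc b),t3,(cf L,Suc b)])
    (enc (if (\<forall>b'. Suc b \<le> b' \<and> b' \<le> L+3 \<longrightarrow> \<not> bitl w (16*b'+3)) then Flag else Inc), [t0,t1,(af w,h),t3,(cf L,p)]) (16*(L+5-Suc b))"
    proof -
      have "n = L + 4 - Suc b" "1 \<le> Suc b" "Suc b \<le> L+4" using Suc.hyps(2) bL by auto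
      from Suc.hyps(1)[OF this] show ?thesis using that by blast
    qed
    have eqc: "(\<forall>b'. Suc b \<le> b' \<and> b' \<le> L+3 \<longrightarrow> \<not> bitl w (16*b'+3)) = (\<forall>b'. b \<le> b' \<and> b' \<le> L+3 \<longrightarrow> \<not> bitl w (16*b'+3))"
    proof
      assume A: "\<forall>b'. Suc b \<le> b' \<and> b' \<le> L+3 \<longrightarrow> \<not> bitl w (16*b'+3)"
      show "\<forall>b'. b \<le> b' \<and> b' \<le> L+3 \<longrightarrow> \<not> bitl w (16*b'+3)"
      proof (intro allI impI)
        fix b' assume "b \<le> b' \<and> b' \<le> L+3"
        then show "\<not> bitl w (16*b'+3)" using A False by (cases "b' = b") auto
      qed
    qed auto
    have "reach \<phi> (enc (BL 0 ((b-1)-L)), [t0,t1,(af w,16*b),t3,(cf L,b)])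
    (enc (if (\<forall>b'. Suc b \<le> b' \<and> b' \<le> L+3 \<longrightarrow> \<not> bitl w (16*b'+3)) then Flag else Inc), [t0,t1,(af w,h),t3,(cf L,p)]) (16*(L+5-b))"
      by (rule reach_trans2[OF r16 hp(2)]) (use bL in simp)
    then show ?thesis using hp(1) unfolding eqc by blast
  qed
qed

lemma af_inc: "(af (nat_code m))(Suc (Suc m) := Some False) = af (nat_code (Suc m))"
  using qt_inc[of m] by (simp add: qt_def)

definition flg :: tape where "flg = ((\<lambda>_. None)(0 := Some True), 0)"

lemma test_phase: "\<exists>h p. p \<le> L+4 \<and> reach \<phi> (enc Disp, [t0,t1,(af w,0),blank_tape,(cf L,0)])
   (enc (if test_ok w L then Flag else Inc), [t0,t1,(af w,h),blank_tape,(cf L,p)]) (16*L+100)"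
proof -
  have sD: "otm_step \<phi> Mc (enc Disp, [t0,t1,(af w,0),blank_tape,(cf L,0)]) = (enc (T 0), [t0,t1,(af w,0),blank_tape,(cf L,0)])"
    by (simp add: step_simp nop_def blank_tape_def)
  show ?thesis
  proof (cases "bitl w 0")
    case False
    have s0: "otm_step \<phi> Mc (enc (T 0), [t0,t1,(af w,0),blank_tape,(cf L,0)]) = (enc Inc, [t0,t1,(af w,0),blank_tape,(cf L,0)])"
      using False by (simp add: step_simp nop_def)
    have r1: "reach \<phi> (enc (T 0), [t0,t1,(af w,0),blank_tape,(cf L,0)]) (enc Inc, [t0,t1,(af w,0),blank_tape,(cf L,0)]) 1"
      by (rule reach_step1[OF s0]) simp
    have r: "reach \<phi> (enc Disp, [t0,t1,(af w,0),blank_tape,(cf L,0)]) (enc Inc, [t0,t1,(af w,0),blank_tape,(cf L,0)]) (16*L+100)"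
      by (rule reach_stepn[OF sD r1]) simp
    have e: "(if test_ok w L then Flag else Inc) = Inc" using False by (simp add: test_ok_def)
    show ?thesis unfolding e using r by (intro exI[of _ 0] exI[of _ 0] conjI) simp_all
  next
    case True
    have s0: "otm_step \<phi> Mc (enc (T 0), [t0,t1,(af w,0),blank_tape,(cf L,0)]) = (enc (T 1), [t0,t1,(af w,1),blank_tape,(cf L,0)])"
      using True by (simp add: step_simp nop_def)
    have r17: "reach \<phi> (enc (T 1), [t0,t1,(af w,1),blank_tape,(cf L,0)]) (enc (T 7), [t0,t1,(af w,7),blank_tape,(cf L,0)]) 6"
      by (rule T_adv') auto
    show ?thesis
    proof (cases "bitl w 7")
      case True7: True
      have s7: "otm_step \<phi> Mc (enc (T 7), [t0,t1,(af w,7),blank_tape,(cf L,0)]) = (enc Inc, [t0,t1,(af w,7),blank_tape,(cf L,0)])"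
        using True7 by (simp add: step_simp nop_def)
      have a: "reach \<phi> (enc (T 7), [t0,t1,(af w,7),blank_tape,(cf L,0)]) (enc Inc, [t0,t1,(af w,7),blank_tape,(cf L,0)]) 1"
        by (rule reach_step1[OF s7]) simp
      have b: "reach \<phi> (enc (T 1), [t0,t1,(af w,1),blank_tape,(cf L,0)]) (enc Inc, [t0,t1,(af w,7),blank_tape,(cf L,0)]) 7"
        by (rule reach_trans2[OF r17 a]) simp
      have c: "reach \<phi> (enc (T 0), [t0,t1,(af w,0),blank_tape,(cf L,0)]) (enc Inc, [t0,t1,(af w,7),blank_tape,(cf L,0)]) 8"
        by (rule reach_stepn[OF s0 b]) simp
      have r: "reach \<phi> (enc Disp, [t0,t1,(af w,0),blank_tape,(cf L,0)]) (enc Inc, [t0,t1,(af w,7),blank_tape,(cf L,0)]) (16*L+100)"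
        by (rule reach_stepn[OF sD c]) simp
      have e: "(if test_ok w L then Flag else Inc) = Inc" using True7 by (simp add: test_ok_def)
      show ?thesis unfolding e using r by (intro exI[of _ 7] exI[of _ 0] conjI) simp_all
    next
      case False7: False
      have s7: "otm_step \<phi> Mc (enc (T 7), [t0,t1,(af w,7),blank_tape,(cf L,0)]) = (enc (T 8), [t0,t1,(af w,8),blank_tape,(cf L,0)])"
        using False7 by (simp add: step_simp nop_def)
      have r815: "reach \<phi> (enc (T 8), [t0,t1,(af w,8),blank_tape,(cf L,0)]) (enc (T 15), [t0,t1,(af w,15),blank_tape,(cf L,0)]) 7"
        by (rule T_adv') auto
      have s15: "otm_step \<phi> Mc (enc (T 15), [t0,t1,(af w,15),blank_tape,(cf L,0)]) = (enc (BL 0 ((1-1)-L)), [t0,t1,(af w,16*1),blank_tape,(cf L,1)])"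
        by (simp add: step_simp nop_def)
      obtain h p where hp: "p \<le> L+4" "reach \<phi> (enc (BL 0 ((1-1)-L)), [t0,t1,(af w,16*1),blank_tape,(cf L,1)])
        (enc (if (\<forall>b'. 1 \<le> b' \<and> b' \<le> L+3 \<longrightarrow> \<not> bitl w (16*b'+3)) then Flag else Inc), [t0,t1,(af w,h),blank_tape,(cf L,p)]) (16*(L+5-1))"
        using bl_loop[of 1 L \<phi> t0 t1 w blank_tape] by auto
      have e: "(if (\<forall>b'. 1 \<le> b' \<and> b' \<le> L+3 \<longrightarrow> \<not> bitl w (16*b'+3)) then Flag else Inc) = (if test_ok w L then Flag else Inc)"
        using True False7 by (simp add: test_ok_def)
      let ?F = "(enc (if test_ok w L then Flag else Inc), [t0,t1,(af w,h),blank_tape,(cf L,p)])"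
      have a: "reach \<phi> (enc (T 15), [t0,t1,(af w,15),blank_tape,(cf L,0)]) ?F (16*(L+5-1) + 1)"
        by (rule reach_stepn[OF s15 hp(2)[unfolded e]]) simp
      have b: "reach \<phi> (enc (T 8), [t0,t1,(af w,8),blank_tape,(cf L,0)]) ?F (16*(L+5-1) + 8)"
        by (rule reach_trans2[OF r815 a]) simp
      have c: "reach \<phi> (enc (T 7), [t0,t1,(af w,7),blank_tape,(cf L,0)]) ?F (16*(L+5-1) + 9)"
        by (rule reach_stepn[OF s7 b]) simp
      have d: "reach \<phi> (enc (T 1), [t0,t1,(af w,1),blank_tape,(cf L,0)]) ?F (16*(L+5-1) + 15)"
        by (rule reach_trans2[OF r17 c]) simp
      have f: "reach \<phi> (enc (T 0), [t0,t1,(af w,0),blank_tape,(cf L,0)]) ?F (16*(L+5-1) + 16)"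
        by (rule reach_stepn[OF s0 d]) simp
      have r: "reach \<phi> (enc Disp, [t0,t1,(af w,0),blank_tape,(cf L,0)]) ?F (16*L+100)"
        by (rule reach_stepn[OF sD f]) simp
      show ?thesis using r hp(1) by blast
    qed
  qed
qed

lemma round: "\<exists>h. reach \<phi> (enc Query, [t0, qt m, t2, blank_tape, (cf L, 0)])
  (enc Query, [t0, qt (if test_ok (\<phi> (nat_code m)) L then m else Suc m), (af (\<phi> (nat_code m)), h),
     (if test_ok (\<phi> (nat_code m)) L then flg else blank_tape), (cf L, 0)]) (17*L + 110)"
proof -
  let ?w = "\<phi> (nat_code m)"
  have sQ: "otm_step \<phi> Mc (enc Query, [t0, qt m, t2, blank_tape, (cf L, 0)]) = (enc Disp, [t0, qt m, (af ?w, 0), blank_tape, (cf L, 0)])"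
    by (simp add: step_query qt_def tape_contents_af string_tape_af)
  obtain h p where hp: "p \<le> L+4" "reach \<phi> (enc Disp, [t0,qt m,(af ?w,0),blank_tape,(cf L,0)])
   (enc (if test_ok ?w L then Flag else Inc), [t0,qt m,(af ?w,h),blank_tape,(cf L,p)]) (16*L+100)"
    using test_phase by blast
  show ?thesis
  proof (cases "test_ok ?w L")
    case True
    have sF: "otm_step \<phi> Mc (enc Flag, [t0,qt m,(af ?w,h),blank_tape,(cf L,p)]) = (enc Rew, [t0,qt m,(af ?w,h),flg,(cf L,p)])"
      by (simp add: step_simp nop_def blank_tape_def flg_def)
    have rw: "reach \<phi> (enc Rew, [t0,qt m,(af ?w,h),flg,(cf L,p)]) (enc Query, [t0,qt m,(af ?w,h),flg,(cf L,0)]) (p+1)"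
      by (rule rew_loop)
    have a: "reach \<phi> (enc Flag, [t0,qt m,(af ?w,h),blank_tape,(cf L,p)]) (enc Query, [t0,qt m,(af ?w,h),flg,(cf L,0)]) (p+2)"
      by (rule reach_stepn[OF sF rw]) simp
    have r: "reach \<phi> (enc Query, [t0, qt m, t2, blank_tape, (cf L, 0)]) (enc Query, [t0,qt m,(af ?w,h),flg,(cf L,0)]) (17*L+110)"
    proof -
      have b: "reach \<phi> (enc Disp, [t0,qt m,(af ?w,0),blank_tape,(cf L,0)]) (enc Query, [t0,qt m,(af ?w,h),flg,(cf L,0)]) (16*L+100 + (p+2))"
        by (rule reach_trans2[OF hp(2)[unfolded if_P[OF True]] a]) simp
      show ?thesis by (rule reach_stepn[OF sQ b]) (use hp(1) in simp)
    qed
    then show ?thesis using True by (intro exI[of _ h]) simp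
  next
    case False
    have sI: "otm_step \<phi> Mc (enc Inc, [t0,qt m,(af ?w,h),blank_tape,(cf L,p)]) = (enc Rew, [t0,qt (Suc m),(af ?w,h),blank_tape,(cf L,p)])"
      by (simp add: step_simp nop_def qt_def af_inc)
    have rw: "reach \<phi> (enc Rew, [t0,qt (Suc m),(af ?w,h),blank_tape,(cf L,p)]) (enc Query, [t0,qt (Suc m),(af ?w,h),blank_tape,(cf L,0)]) (p+1)"
      by (rule rew_loop)
    have a: "reach \<phi> (enc Inc, [t0,qt m,(af ?w,h),blank_tape,(cf L,p)]) (enc Query, [t0,qt (Suc m),(af ?w,h),blank_tape,(cf L,0)]) (p+2)"
      by (rule reach_stepn[OF sI rw]) simp
    have r: "reach \<phi> (enc Query, [t0, qt m, t2, blank_tape, (cf L, 0)]) (enc Query, [t0,qt (Suc m),(af ?w,h),blank_tape,(cf L,0)]) (17*L+110)"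
    proof -
      have b: "reach \<phi> (enc Disp, [t0,qt m,(af ?w,0),blank_tape,(cf L,0)]) (enc Query, [t0,qt (Suc m),(af ?w,h),blank_tape,(cf L,0)]) (16*L+100 + (p+2))"
        by (rule reach_trans2[OF hp(2)[unfolded if_not_P[OF False]] a]) simp
      show ?thesis by (rule reach_stepn[OF sQ b]) (use hp(1) in simp)
    qed
    then show ?thesis using False by (intro exI[of _ h]) simp
  qed
qed

lemma search:
  assumes ok: "test_ok (\<phi> (nat_code ms)) L" and nok: "\<forall>m<ms. \<not> test_ok (\<phi> (nat_code m)) L" and "m \<le> ms"
  shows "\<exists>t2'. reach \<phi> (enc Query, [t0, qt m, t2, blank_tape, (cf L,0)]) (enc Query, [t0, qt ms, t2', flg, (cf L,0)]) ((ms - m + 1) * (17*L+110))"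
  using assms(3)
proof (induction "ms - m" arbitrary: m t2)
  case 0
  then have m: "m = ms" by simp
  obtain h where h: "reach \<phi> (enc Query, [t0, qt m, t2, blank_tape, (cf L, 0)])
  (enc Query, [t0, qt (if test_ok (\<phi> (nat_code m)) L then m else Suc m), (af (\<phi> (nat_code m)), h),
     (if test_ok (\<phi> (nat_code m)) L then flg else blank_tape), (cf L, 0)]) (17*L + 110)"
    using round by blast
  then show ?case using ok unfolding m by (intro exI[of _ "(af (\<phi> (nat_code ms)), h)"]) simp
next
  case (Suc n)
  then have m: "m < ms" by simp
  then have nm: "\<not> test_ok (\<phi> (nat_code m)) L" using nok by simp
  obtain h where h: "reach \<phi> (enc Query, [t0, qt m, t2, blank_tape, (cf L, 0)])
  (enc Query, [t0, qt (if test_ok (\<phi> (nat_code m)) L then m else Suc m), (af (\<phi> (nat_code m)), h),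
     (if test_ok (\<phi> (nat_code m)) L then flg else blank_tape), (cf L, 0)]) (17*L + 110)"
    using round by blast
  have h': "reach \<phi> (enc Query, [t0, qt m, t2, blank_tape, (cf L, 0)])
  (enc Query, [t0, qt (Suc m), (af (\<phi> (nat_code m)), h), blank_tape, (cf L, 0)]) (17*L + 110)"
    using h nm by simp
  obtain t2' where t2': "reach \<phi> (enc Query, [t0, qt (Suc m), (af (\<phi> (nat_code m)), h), blank_tape, (cf L,0)]) (enc Query, [t0, qt ms, t2', flg, (cf L,0)]) ((ms - Suc m + 1) * (17*L+110))"
  proof -
    have "n = ms - Suc m" "Suc m \<le> ms" using Suc.hyps(2) m by auto
    from Suc.hyps(1)[OF this, of "(af (\<phi> (nat_code m)), h)"] show ?thesis using that by blast
  qed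
  have "reach \<phi> (enc Query, [t0, qt m, t2, blank_tape, (cf L,0)]) (enc Query, [t0, qt ms, t2', flg, (cf L,0)]) ((ms - m + 1) * (17*L+110))"
  proof (rule reach_trans2[OF h' t2'])
    have "ms - m + 1 = Suc (ms - Suc m + 1)" using m by simp
    then show "17 * L + 110 + (ms - Suc m + 1) * (17 * L + 110) \<le> (ms - m + 1) * (17 * L + 110)" by simp
  qed
  then show ?case by blast
qed


definition Mo :: "bool list \<Rightarrow> nat \<Rightarrow> nat" where
  "Mo w L = (LEAST j. \<not> bitl w (16*j+5) \<and> L+4 \<le> j)"

definition wv :: "bool list \<Rightarrow> nat \<Rightarrow> nat \<Rightarrow> nat \<Rightarrow> bool" where
  "wv w L j t = wval t (bitl w (16*j+5)) (bitl w (16*j+9)) (bitl w (16*j+17)) (j < L) (Suc j < L) (min 5 (Suc j - L))"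

definition ml :: "bool list \<Rightarrow> nat \<Rightarrow> bool list" where
  "ml w L = [True, bitl w 1, True, False] @ concat (map (\<lambda>j. map (wv w L j) [0..<16]) [0..<Mo w L])"

lemma Mo_ex: "\<exists>j. \<not> bitl w (16*j+5) \<and> L+4 \<le> j"
  by (rule exI[of _ "L + 4 + length w"]) (auto simp: bitl_def)

lemma Mo_prop: "\<not> bitl w (16*Mo w L+5) \<and> L+4 \<le> Mo w L"
  unfolding Mo_def by (rule LeastI_ex[OF Mo_ex])

lemma Mo_less: "j < Mo w L \<Longrightarrow> \<not> (\<not> bitl w (16*j+5) \<and> L+4 \<le> j)"
  unfolding Mo_def by (rule not_less_Least)

lemma concat_map_nth_gen:
  assumes "\<And>j. length (f j) = c" "i < n" "t < c"
  shows "concat (map f [0..<n]) ! (c*i+t) = f i ! t"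
  using assms(2)
proof (induction n)
  case 0 then show ?case by simp
next
  case (Suc n)
  have len: "length (concat (map f [0..<n])) = c * n" using assms(1)
    by (induction n) simp_all
  show ?case
  proof (cases "i < n")
    case True
    have "c*i+t < c * Suc i" using assms(3) by simp
    also have "c * Suc i \<le> c*n" using True by (intro mult_le_mono2) simp
    finally have "c*i+t < c*n" .
    then show ?thesis using Suc True len by (simp add: nth_append)
  next
    case False
    then have "i = n" using Suc by simp
    then show ?thesis using len assms by (simp add: nth_append)
  qed
qed

lemma length_ml: "length (ml w L) = 16 * Mo w L + 4"
proof -
  have "length (concat (map (\<lambda>j. map (wv w L j) [0..<16]) [0..<n])) = 16 * n" for n
    by (induction n) simp_all
  then show ?thesis unfolding ml_def by simp
qed

lemma ml_nth: "j < Mo w L \<Longrightarrow> t < 16 \<Longrightarrow> ml w L ! (16*j+4+t) = wv w L j t"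
proof -
  assume a: "j < Mo w L" "t < 16"
  have "ml w L ! (16*j+4+t) = concat (map (\<lambda>j. map (wv w L j) [0..<16]) [0..<Mo w L]) ! (16*j+t)"
    unfolding ml_def by (simp add: nth_append)
  also have "\<dots> = wv w L j t" using concat_map_nth_gen[of "\<lambda>j. map (wv w L j) [0..<16]" 16 j "Mo w L" t] a by simp
  finally show ?thesis .
qed

lemma af_take_upd: "k < length l \<Longrightarrow> (af (take k l))(k := Some (l!k)) = af (take (Suc k) l)"
  by (auto simp: af_def fun_eq_iff nth_take take_Suc_conv_app_nth nth_append)

lemma R_adv: "k1 \<le> k2 \<Longrightarrow> k2 \<le> 15 \<Longrightarrow> x \<le> 5 \<Longrightarrow> (\<forall>k. k1 \<le> k \<and> k < k2 \<longrightarrow> k \<noteq> 0 \<and> k \<noteq> 1 \<and> k \<noteq> 5 \<and> k \<noteq> 13) \<Longrightarrow>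
  reach \<phi> (enc (R k1 P I F a b x), [t0,t1,(f,h),t3,t4]) (enc (R k2 P I F a b x), [t0,t1,(f,h + (k2-k1)),t3,t4]) (k2 - k1)"
proof (induction "k2 - k1" arbitrary: k1 h)
  case 0 then show ?case using reach_refl by simp
next
  case (Suc n)
  then have k: "k1 < k2" "k1 \<noteq> 0" "k1 \<noteq> 1" "k1 \<noteq> 5" "k1 \<noteq> 13" "k1 < 15" by auto
  obtain k' where k': "k1 = Suc k'" using k by (cases k1) auto
  have s: "otm_step \<phi> Mc (enc (R k1 P I F a b x), [t0,t1,(f,h),t3,t4]) = (enc (R (Suc k1) P I F a b x), [t0,t1,(f,Suc h),t3,t4])"
    using k Suc.prems unfolding k' by (simp add: step_simp nop_def)
  have "reach \<phi> (enc (R (Suc k1) P I F a b x), [t0,t1,(f,Suc h),t3,t4]) (enc (R k2 P I F a b x), [t0,t1,(f,Suc h + (k2-Suc k1)),t3,t4]) (k2 - Suc k1)"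
    using Suc k by (intro Suc.hyps) auto
  moreover have eq: "Suc h + (k2 - Suc k1) = h + (k2 - k1)" using k by simp
  ultimately show ?case using k by (intro reach_stepn[OF s]) auto
qed

lemma R_adv': "k1 \<le> k2 \<Longrightarrow> k2 \<le> 15 \<Longrightarrow> x \<le> 5 \<Longrightarrow> (\<forall>k. k1 \<le> k \<and> k < k2 \<longrightarrow> k \<noteq> 0 \<and> k \<noteq> 1 \<and> k \<noteq> 5 \<and> k \<noteq> 13) \<Longrightarrow>
  h' = h + (k2 - k1) \<Longrightarrow> n = k2 - k1 \<Longrightarrow>
  reach \<phi> (enc (R k1 P I F a b x), [t0,t1,(f,h),t3,t4]) (enc (R k2 P I F a b x), [t0,t1,(f,h'),t3,t4]) n"
  using R_adv[of k1 k2 x] by simp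

lemma read_block:
  fixes j L :: nat
  defines "x \<equiv> min 5 (j - L)" and "x' \<equiv> min 5 (Suc j - L)"
  shows "reach \<phi> (enc (R 0 False False False False False x), [t0,t1,(af w,16*j+4),t3,(cf L, Suc j)])
    (enc (R 15 (bitl w (16*j+5)) (bitl w (16*j+9)) (bitl w (16*j+17)) (j < L) (Suc j < L) x'),
      [t0,t1,(af w,16*j+19),t3,(cf L, Suc (Suc j))]) 15"
proof -
  let ?P = "bitl w (16*j+5)" and ?I = "bitl w (16*j+9)" and ?F = "bitl w (16*j+17)" and ?a = "j < L" and ?b = "Suc j < L"
  have x'5: "x' \<le> 5" unfolding x'_def by simp
  have s0: "otm_step \<phi> Mc (enc (R 0 False False False False False x), [t0,t1,(af w,16*j+4),t3,(cf L, Suc j)]) =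
     (enc (R 1 False False False ?a False x'), [t0,t1,(af w,16*j+5),t3,(cf L, Suc (Suc j))])"
    unfolding x_def x'_def by (simp add: step_simp nop_def Let_def) linarith
  have s1: "otm_step \<phi> Mc (enc (R 1 False False False ?a False x'), [t0,t1,(af w,16*j+5),t3,(cf L, Suc (Suc j))]) =
     (enc (R 2 ?P False False ?a ?b x'), [t0,t1,(af w,16*j+6),t3,(cf L, Suc (Suc j))])"
    using x'5 by (simp add: step_simp nop_def Let_def)
  have r25: "reach \<phi> (enc (R 2 ?P False False ?a ?b x'), [t0,t1,(af w,16*j+6),t3,(cf L, Suc (Suc j))])
     (enc (R 5 ?P False False ?a ?b x'), [t0,t1,(af w,16*j+9),t3,(cf L, Suc (Suc j))]) 3"
    by (rule R_adv') (use x'5 in auto)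
  have s5: "otm_step \<phi> Mc (enc (R 5 ?P False False ?a ?b x'), [t0,t1,(af w,16*j+9),t3,(cf L, Suc (Suc j))]) =
     (enc (R 6 ?P ?I False ?a ?b x'), [t0,t1,(af w,16*j+10),t3,(cf L, Suc (Suc j))])"
    using x'5 by (simp add: step_simp nop_def Let_def)
  have r613: "reach \<phi> (enc (R 6 ?P ?I False ?a ?b x'), [t0,t1,(af w,16*j+10),t3,(cf L, Suc (Suc j))])
     (enc (R 13 ?P ?I False ?a ?b x'), [t0,t1,(af w,16*j+17),t3,(cf L, Suc (Suc j))]) 7"
    by (rule R_adv') (use x'5 in auto)
  have s13: "otm_step \<phi> Mc (enc (R 13 ?P ?I False ?a ?b x'), [t0,t1,(af w,16*j+17),t3,(cf L, Suc (Suc j))]) =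
     (enc (R 14 ?P ?I ?F ?a ?b x'), [t0,t1,(af w,16*j+18),t3,(cf L, Suc (Suc j))])"
    using x'5 by (simp add: step_simp nop_def Let_def)
  have r1415: "reach \<phi> (enc (R 14 ?P ?I ?F ?a ?b x'), [t0,t1,(af w,16*j+18),t3,(cf L, Suc (Suc j))])
     (enc (R 15 ?P ?I ?F ?a ?b x'), [t0,t1,(af w,16*j+19),t3,(cf L, Suc (Suc j))]) 1"
    by (rule R_adv') (use x'5 in auto)
  have c1: "reach \<phi> (enc (R 13 ?P ?I False ?a ?b x'), [t0,t1,(af w,16*j+17),t3,(cf L, Suc (Suc j))])
     (enc (R 15 ?P ?I ?F ?a ?b x'), [t0,t1,(af w,16*j+19),t3,(cf L, Suc (Suc j))]) 2"
    by (rule reach_stepn[OF s13 r1415]) simp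
  have c2: "reach \<phi> (enc (R 6 ?P ?I False ?a ?b x'), [t0,t1,(af w,16*j+10),t3,(cf L, Suc (Suc j))])
     (enc (R 15 ?P ?I ?F ?a ?b x'), [t0,t1,(af w,16*j+19),t3,(cf L, Suc (Suc j))]) 9"
    by (rule reach_trans2[OF r613 c1]) simp
  have c3: "reach \<phi> (enc (R 5 ?P False False ?a ?b x'), [t0,t1,(af w,16*j+9),t3,(cf L, Suc (Suc j))])
     (enc (R 15 ?P ?I ?F ?a ?b x'), [t0,t1,(af w,16*j+19),t3,(cf L, Suc (Suc j))]) 10"
    by (rule reach_stepn[OF s5 c2]) simp
  have c4: "reach \<phi> (enc (R 2 ?P False False ?a ?b x'), [t0,t1,(af w,16*j+6),t3,(cf L, Suc (Suc j))])
     (enc (R 15 ?P ?I ?F ?a ?b x'), [t0,t1,(af w,16*j+19),t3,(cf L, Suc (Suc j))]) 13"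
    by (rule reach_trans2[OF r25 c3]) simp
  have c5: "reach \<phi> (enc (R 1 False False False ?a False x'), [t0,t1,(af w,16*j+5),t3,(cf L, Suc (Suc j))])
     (enc (R 15 ?P ?I ?F ?a ?b x'), [t0,t1,(af w,16*j+19),t3,(cf L, Suc (Suc j))]) 14"
    by (rule reach_stepn[OF s1 c4]) simp
  show ?thesis by (rule reach_stepn[OF s0 c5]) simp
qed

lemma write_loop:
  assumes "t \<le> 15" "x \<le> 5" "n + 16 \<le> length l" "\<forall>t'<16. l ! (n+t') = wval t' P I F a b x"
  shows "reach \<phi> (enc (W t P I F a b x), [t0,t1,t2,(af (take (n+t) l), n+t),t4])
     (enc (R 0 False False False False False x), [t0,t1,t2,(af (take (n+16) l), n+16),t4]) (16 - t)"
  using assms(1)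
proof (induction "15 - t" arbitrary: t)
  case 0
  then have t: "t = 15" by simp
  have "otm_step \<phi> Mc (enc (W t P I F a b x), [t0,t1,t2,(af (take (n+t) l), n+t),t4]) =
    (enc (R 0 False False False False False x), [t0,t1,t2,(af (take (n+16) l), n+16),t4])"
  proof -
    have A: "(af (take (n+15) l))(n+15 := Some (l!(n+15))) = af (take (n+16) l)"
      using af_take_upd[of "n+15" l] assms(3) by (simp add: eval_nat_numeral)
    have B: "l!(n+15) = wval 15 P I F a b x" using assms(4) by simp
    have C: "(af (take (n+15) l))(n+15 := Some (wval 15 P I F a b x)) = af (take (n+16) l)"
      using A B by simp
    show ?thesis using assms(2) unfolding t by (simp add: step_simp nop_def C)
  qed
  then show ?case unfolding t by (rule reach_step1) simp
next
  case (Suc k)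
  then have t: "t < 15" by simp
  have s: "otm_step \<phi> Mc (enc (W t P I F a b x), [t0,t1,t2,(af (take (n+t) l), n+t),t4]) =
    (enc (W (Suc t) P I F a b x), [t0,t1,t2,(af (take (n+Suc t) l), n+Suc t),t4])"
  proof -
    have "l ! (n+t) = wval t P I F a b x" using assms(4) t by simp
    moreover have "n + t < length l" using assms(3) t by simp
    ultimately show ?thesis using t assms(2) by (simp add: step_simp nop_def af_take_upd[symmetric])
  qed
  have "reach \<phi> (enc (W (Suc t) P I F a b x), [t0,t1,t2,(af (take (n+Suc t) l), n+Suc t),t4])
     (enc (R 0 False False False False False x), [t0,t1,t2,(af (take (n+16) l), n+16),t4]) (16 - Suc t)"
    using Suc t by (intro Suc.hyps) auto
  then show ?case by (rule reach_stepn[OF s]) (use t in simp)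
qed

lemma out_loop:
  assumes "j \<le> Mo w L"
  shows "\<exists>hh hh' cc. reach \<phi> (enc (R 0 False False False False False (min 5 (j - L))),
      [t0,t1,(af w,16*j+4),(af (take (16*j+4) (ml w L)), 16*j+4),(cf L, Suc j)])
    (enc Halt, [t0,t1,(af w, hh), (af (ml w L), hh'), (cf L, cc)]) (33*(Mo w L - j) + 16)"
  using assms
proof (induction "Mo w L - j" arbitrary: j)
  case 0
  then have j: "j = Mo w L" by simp
  let ?x' = "min 5 (Suc j - L)"
  have rb: "reach \<phi> (enc (R 0 False False False False False (min 5 (j - L))), [t0,t1,(af w,16*j+4),(af (take (16*j+4) (ml w L)), 16*j+4),(cf L, Suc j)])
    (enc (R 15 (bitl w (16*j+5)) (bitl w (16*j+9)) (bitl w (16*j+17)) (j < L) (Suc j < L) ?x'),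
      [t0,t1,(af w,16*j+19),(af (take (16*j+4) (ml w L)), 16*j+4),(cf L, Suc (Suc j))]) 15"
    by (rule read_block)
  have P: "\<not> bitl w (16*j+5)" "L + 4 \<le> j" using Mo_prop[of w L] j by auto
  have x5: "?x' = 5" using P(2) by simp
  have sH: "otm_step \<phi> Mc (enc (R 15 (bitl w (16*j+5)) (bitl w (16*j+9)) (bitl w (16*j+17)) (j < L) (Suc j < L) ?x'),
      [t0,t1,(af w,16*j+19),(af (take (16*j+4) (ml w L)), 16*j+4),(cf L, Suc (Suc j))]) =
     (enc Halt, [t0,t1,(af w,16*j+19),(af (take (16*j+4) (ml w L)), 16*j+4),(cf L, Suc (Suc j))])"
    using P(1) x5 by (simp add: step_simp nop_def)
  have "reach \<phi> (enc (R 0 False False False False False (min 5 (j - L))), [t0,t1,(af w,16*j+4),(af (take (16*j+4) (ml w L)), 16*j+4),(cf L, Suc j)])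
     (enc Halt, [t0,t1,(af w,16*j+19),(af (take (16*j+4) (ml w L)), 16*j+4),(cf L, Suc (Suc j))]) 16"
  proof -
    have "reach \<phi> (enc (R 15 (bitl w (16*j+5)) (bitl w (16*j+9)) (bitl w (16*j+17)) (j < L) (Suc j < L) ?x'),
      [t0,t1,(af w,16*j+19),(af (take (16*j+4) (ml w L)), 16*j+4),(cf L, Suc (Suc j))])
     (enc Halt, [t0,t1,(af w,16*j+19),(af (take (16*j+4) (ml w L)), 16*j+4),(cf L, Suc (Suc j))]) 1"
      by (rule reach_step1[OF sH]) simp
    from reach_trans2[OF rb this] show ?thesis by simp
  qed
  moreover have "take (16*j+4) (ml w L) = ml w L" using j length_ml by simp
  ultimately show ?case by (intro exI) (use j in simp)
next
  case (Suc n)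
  then have jM: "j < Mo w L" by simp
  let ?x' = "min 5 (Suc j - L)"
  let ?P = "bitl w (16*j+5)" and ?I = "bitl w (16*j+9)" and ?F = "bitl w (16*j+17)" and ?a = "j < L" and ?b = "Suc j < L"
  let ?ml = "ml w L"
  have rb: "reach \<phi> (enc (R 0 False False False False False (min 5 (j - L))), [t0,t1,(af w,16*j+4),(af (take (16*j+4) ?ml), 16*j+4),(cf L, Suc j)])
    (enc (R 15 ?P ?I ?F ?a ?b ?x'),
      [t0,t1,(af w,16*j+19),(af (take (16*j+4) ?ml), 16*j+4),(cf L, Suc (Suc j))]) 15"
    by (rule read_block)
  have cont: "\<not> (\<not> ?P \<and> 5 \<le> ?x')" using Mo_less[OF jM] by auto
  have sW: "otm_step \<phi> Mc (enc (R 15 ?P ?I ?F ?a ?b ?x'), [t0,t1,(af w,16*j+19),(af (take (16*j+4) ?ml), 16*j+4),(cf L, Suc (Suc j))]) =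
     (enc (W 0 ?P ?I ?F ?a ?b ?x'), [t0,t1,(af w,16*j+20),(af (take (16*j+4+0) ?ml), 16*j+4+0),(cf L, Suc (Suc j))])"
    using cont by (simp add: step_simp nop_def)
  have wl: "reach \<phi> (enc (W 0 ?P ?I ?F ?a ?b ?x'), [t0,t1,(af w,16*j+20),(af (take (16*j+4+0) ?ml), 16*j+4+0),(cf L, Suc (Suc j))])
     (enc (R 0 False False False False False ?x'), [t0,t1,(af w,16*j+20),(af (take (16*j+20) ?ml), 16*j+20),(cf L, Suc (Suc j))]) 16"
  proof -
    have "16 * j + 4 + 16 \<le> length ?ml" using jM length_ml[of w L] by simp
    moreover have "\<forall>t'<16. ?ml ! (16 * j + 4 + t') = wval t' ?P ?I ?F ?a ?b ?x'"
      using ml_nth[OF jM] by (simp add: wv_def)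
    ultimately have "reach \<phi> (enc (W 0 ?P ?I ?F ?a ?b ?x'), [t0,t1,(af w,16*j+20),(af (take (16*j+4+0) ?ml), 16*j+4+0),(cf L, Suc (Suc j))])
     (enc (R 0 False False False False False ?x'), [t0,t1,(af w,16*j+20),(af (take (16*j+4+16) ?ml), 16*j+4+16),(cf L, Suc (Suc j))]) (16 - 0)"
      by (intro write_loop) simp_all
    moreover have "16*j+4+16 = 16*j+20" by simp
    ultimately show ?thesis by (simp only: diff_zero add_0_right)
  qed
  obtain hh hh' cc where ih: "reach \<phi> (enc (R 0 False False False False False (min 5 (Suc j - L))),
      [t0,t1,(af w,16*Suc j+4),(af (take (16*Suc j+4) ?ml), 16*Suc j+4),(cf L, Suc (Suc j))])
    (enc Halt, [t0,t1,(af w, hh), (af ?ml, hh'), (cf L, cc)]) (33*(Mo w L - Suc j) + 16)"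
  proof -
    have "n = Mo w L - Suc j" "Suc j \<le> Mo w L" using Suc.hyps(2) jM by auto
    from Suc.hyps(1)[OF this] show ?thesis using that by blast
  qed
  have e1: "16*Suc j+4 = 16*j+20" by simp
  have a: "reach \<phi> (enc (W 0 ?P ?I ?F ?a ?b ?x'), [t0,t1,(af w,16*j+20),(af (take (16*j+4+0) ?ml), 16*j+4+0),(cf L, Suc (Suc j))])
    (enc Halt, [t0,t1,(af w, hh), (af ?ml, hh'), (cf L, cc)]) (16 + (33*(Mo w L - Suc j) + 16))"
    by (rule reach_trans2[OF wl ih[unfolded e1]]) simp_all
  have b: "reach \<phi> (enc (R 15 ?P ?I ?F ?a ?b ?x'), [t0,t1,(af w,16*j+19),(af (take (16*j+4) ?ml), 16*j+4),(cf L, Suc (Suc j))])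
    (enc Halt, [t0,t1,(af w, hh), (af ?ml, hh'), (cf L, cc)]) (17 + (33*(Mo w L - Suc j) + 16))"
    by (rule reach_stepn[OF sW a]) simp
  have "reach \<phi> (enc (R 0 False False False False False (min 5 (j - L))), [t0,t1,(af w,16*j+4),(af (take (16*j+4) ?ml), 16*j+4),(cf L, Suc j)])
    (enc Halt, [t0,t1,(af w, hh), (af ?ml, hh'), (cf L, cc)]) (33*(Mo w L - j) + 16)"
    by (rule reach_trans2[OF rb b]) (use jM in simp)
  then show ?case by blast
qed

lemma out_phase:
  fixes \<phi> :: "bool list \<Rightarrow> bool list" and ms :: nat
  defines "w \<equiv> \<phi> (nat_code ms)"
  shows "\<exists>hh hh' cc. reach \<phi> (enc Query, [ua, qt ms, ub, flg, (cf L, 0)])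
     (enc Halt, [ua, qt ms, (af w, hh), (af (ml w L), hh'), (cf L, cc)]) (33 * Mo w L + 30)"
proof -
  let ?f0 = "(\<lambda>_. None)(0 := Some True) :: nat \<Rightarrow> bool option"
  let ?sg = "bitl w 1"
  have sQ: "otm_step \<phi> Mc (enc Query, [ua, qt ms, ub, flg, (cf L, 0)]) = (enc Disp, [ua, qt ms, (af w, 0), flg, (cf L, 0)])"
    unfolding w_def by (simp add: step_query qt_def tape_contents_af string_tape_af)
  have sD: "otm_step \<phi> Mc (enc Disp, [ua, qt ms, (af w, 0), flg, (cf L, 0)]) = (enc O0, [ua, qt ms, (af w, 0), flg, (cf L, 0)])"
    by (simp add: step_simp nop_def flg_def)
  have s0: "otm_step \<phi> Mc (enc O0, [ua, qt ms, (af w, 0), flg, (cf L, 0)]) = (enc O1, [ua, qt ms, (af w, 1), flg, (cf L, 0)])"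
    by (simp add: step_simp nop_def flg_def)
  have s1: "otm_step \<phi> Mc (enc O1, [ua, qt ms, (af w, 1), flg, (cf L, 0)]) = (enc (if ?sg then O2T else O2F), [ua, qt ms, (af w, 2), (?f0, 1), (cf L, 0)])"
    by (simp add: step_simp nop_def flg_def)
  have s2: "otm_step \<phi> Mc (enc (if ?sg then O2T else O2F), [ua, qt ms, (af w, 2), (?f0, 1), (cf L, 0)]) = (enc O3, [ua, qt ms, (af w, 3), (?f0(1 := Some ?sg), 2), (cf L, 0)])"
    by (cases ?sg) (simp_all add: step_simp nop_def)
  have s3: "otm_step \<phi> Mc (enc O3, [ua, qt ms, (af w, 3), (?f0(1 := Some ?sg), 2), (cf L, 0)]) = (enc O4, [ua, qt ms, (af w, 4), (?f0(1 := Some ?sg, 2 := Some True), 3), (cf L, 0)])"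
    by (simp add: step_simp nop_def)
  have t4: "take 4 (ml w L) = [True, ?sg, True, False]" by (simp add: ml_def)
  have fe: "?f0(1 := Some ?sg, 2 := Some True, 3 := Some False) = af (take 4 (ml w L))"
    unfolding t4
  proof
    fix p :: nat
    consider "p = 0" | "p = 1" | "p = 2" | "p = 3" | "p \<ge> 4" by arith
    then show "(?f0(1 := Some ?sg, 2 := Some True, 3 := Some False)) p = af [True, ?sg, True, False] p"
      by cases (simp_all add: af_def)
  qed
  have s4: "otm_step \<phi> Mc (enc O4, [ua, qt ms, (af w, 4), (?f0(1 := Some ?sg, 2 := Some True), 3), (cf L, 0)]) =
     (enc (R 0 False False False False False (min 5 (0 - L))), [ua, qt ms, (af w, 16*0+4), (af (take (16*0+4) (ml w L)), 16*0+4), (cf L, Suc 0)])"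
    by (simp add: step_simp nop_def fe[symmetric])
  obtain hh hh' cc where ol: "reach \<phi> (enc (R 0 False False False False False (min 5 (0 - L))),
      [ua,qt ms,(af w,16*0+4),(af (take (16*0+4) (ml w L)), 16*0+4),(cf L, Suc 0)])
    (enc Halt, [ua,qt ms,(af w, hh), (af (ml w L), hh'), (cf L, cc)]) (33*(Mo w L - 0) + 16)"
    using out_loop[of 0 w L \<phi> ua "qt ms"] by auto
  let ?H = "(enc Halt, [ua,qt ms,(af w, hh), (af (ml w L), hh'), (cf L, cc)])"
  have a4: "reach \<phi> (enc O4, [ua, qt ms, (af w, 4), (?f0(1 := Some ?sg, 2 := Some True), 3), (cf L, 0)]) ?H (33*(Mo w L - 0) + 17)"
    by (rule reach_stepn[OF s4 ol]) simp
  have a3: "reach \<phi> (enc O3, [ua, qt ms, (af w, 3), (?f0(1 := Some ?sg), 2), (cf L, 0)]) ?H (33*(Mo w L - 0) + 18)"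
    by (rule reach_stepn[OF s3 a4]) simp
  have a2: "reach \<phi> (enc (if ?sg then O2T else O2F), [ua, qt ms, (af w, 2), (?f0, 1), (cf L, 0)]) ?H (33*(Mo w L - 0) + 19)"
    by (rule reach_stepn[OF s2 a3]) simp
  have a1: "reach \<phi> (enc O1, [ua, qt ms, (af w, 1), flg, (cf L, 0)]) ?H (33*(Mo w L - 0) + 20)"
    by (rule reach_stepn[OF s1 a2]) simp
  have a0: "reach \<phi> (enc O0, [ua, qt ms, (af w, 0), flg, (cf L, 0)]) ?H (33*(Mo w L - 0) + 21)"
    by (rule reach_stepn[OF s0 a1]) simp
  have aD: "reach \<phi> (enc Disp, [ua, qt ms, (af w, 0), flg, (cf L, 0)]) ?H (33*(Mo w L - 0) + 22)"
    by (rule reach_stepn[OF sD a0]) simp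
  have aQ: "reach \<phi> (enc Query, [ua, qt ms, ub, flg, (cf L, 0)]) ?H (33 * Mo w L + 30)"
    by (rule reach_stepn[OF sQ aD]) simp
  then show ?thesis by blast
qed

definition ms_of :: "(bool list \<Rightarrow> bool list) \<Rightarrow> nat \<Rightarrow> nat" where
  "ms_of \<phi> L = (LEAST m. test_ok (\<phi> (nat_code m)) L)"

lemma run_halted: "fst ((otm_step \<phi> M ^^ t) c) = 1 \<Longrightarrow> (otm_step \<phi> M ^^ (t + d)) c = (otm_step \<phi> M ^^ t) c"
proof (induction d)
  case 0 then show ?case by simp
next
  case (Suc d)
  have "(otm_step \<phi> M ^^ (t + Suc d)) c = otm_step \<phi> M ((otm_step \<phi> M ^^ (t + d)) c)" by simp
  also have "\<dots> = otm_step \<phi> M ((otm_step \<phi> M ^^ t) c)" using Suc by simp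
  also have "\<dots> = (otm_step \<phi> M ^^ t) c"
  proof -
    obtain q ts where e: "(otm_step \<phi> M ^^ t) c = (q, ts)" by fastforce
    have "q = 1" using Suc.prems e by simp
    then show ?thesis using e by (simp add: otm_step_def Let_def)
  qed
  finally show ?case .
qed

lemma machine:
  fixes a :: "bool list" and \<phi> :: "bool list \<Rightarrow> bool list"
  defines "L \<equiv> length a"
  defines "ms \<equiv> ms_of \<phi> L"
  defines "w \<equiv> \<phi> (nat_code ms)"
  assumes ex: "\<exists>m. test_ok (\<phi> (nat_code m)) L"
  shows "otm_halts_within \<phi> Mc a (otm_time \<phi> Mc a)"
    "otm_time \<phi> Mc a \<le> 2*L+5 + (ms+1)*(17*L+110) + (33 * Mo w L + 30)"
    "otm_out \<phi> Mc a = ml w L"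
proof -
  have ok: "test_ok (\<phi> (nat_code ms)) L" unfolding ms_def ms_of_def by (rule LeastI_ex[OF ex])
  have nok: "\<forall>m<ms. \<not> test_ok (\<phi> (nat_code m)) L" unfolding ms_def ms_of_def using not_less_Least by blast
  let ?t0 = "(af a, L)"
  have r1: "reach \<phi> (enc Init, [string_tape a, blank_tape, blank_tape, blank_tape, blank_tape])
   (enc Query, [?t0, qt 0, blank_tape, blank_tape, (cf L, 0)]) (2 * L + 5)"
    unfolding L_def by (rule ph_init)
  obtain t2' where r2: "reach \<phi> (enc Query, [?t0, qt 0, blank_tape, blank_tape, (cf L,0)]) (enc Query, [?t0, qt ms, t2', flg, (cf L,0)]) ((ms - 0 + 1) * (17*L+110))"
    using search[OF ok nok, of 0 ?t0 blank_tape] by auto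
  obtain hh hh' cc where r3: "reach \<phi> (enc Query, [?t0, qt ms, t2', flg, (cf L, 0)])
     (enc Halt, [?t0, qt ms, (af w, hh), (af (ml w L), hh'), (cf L, cc)]) (33 * Mo w L + 30)"
    using out_phase[where \<phi>=\<phi> and ms=ms and ua="?t0" and ub=t2' and L=L] unfolding w_def by blast
  let ?H = "(enc Halt, [?t0, qt ms, (af w, hh), (af (ml w L), hh'), (cf L, cc)])"
  have init: "otm_init Mc a = (enc Init, [string_tape a, blank_tape, blank_tape, blank_tape, blank_tape])"
    by (simp add: otm_init_def Mc_def enc.simps numeral_eq_Suc)
  have "reach \<phi> (otm_init Mc a) ?H (2*L+5 + (ms+1)*(17*L+110) + (33 * Mo w L + 30))"
    unfolding init by (rule reach_trans2[OF reach_trans2[OF r1 r2 order_refl] r3]) simp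
  then obtain t where t: "t \<le> 2*L+5 + (ms+1)*(17*L+110) + (33 * Mo w L + 30)" "otm_run \<phi> Mc a t = ?H"
    unfolding reach_def otm_run_def by blast
  have hw: "otm_halts_within \<phi> Mc a t" using t(2) by (simp add: otm_halts_within_def enc.simps)
  then have hT: "otm_halts_within \<phi> Mc a (otm_time \<phi> Mc a)" unfolding otm_time_def by (rule LeastI)
  then show "otm_halts_within \<phi> Mc a (otm_time \<phi> Mc a)" .
  have le: "otm_time \<phi> Mc a \<le> t" unfolding otm_time_def using hw by (rule Least_le)
  then show "otm_time \<phi> Mc a \<le> 2*L+5 + (ms+1)*(17*L+110) + (33 * Mo w L + 30)" using t(1) by simp
  have "otm_run \<phi> Mc a t = otm_run \<phi> Mc a (otm_time \<phi> Mc a + (t - otm_time \<phi> Mc a))" using le by simp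
  also have "\<dots> = otm_run \<phi> Mc a (otm_time \<phi> Mc a)" unfolding otm_run_def
    by (rule run_halted) (use hT in \<open>simp add: otm_halts_within_def otm_run_def\<close>)
  finally have "otm_run \<phi> Mc a (otm_time \<phi> Mc a) = ?H" using t(2) by simp
  then show "otm_out \<phi> Mc a = ml w L" by (simp add: otm_out_def tape_contents_af)
qed


lemma bitl_pc4: "u < 4 \<Longrightarrow> bitl (pair_code A B) (4*i+u) = [i < length A, bitl A i, i < length B, bitl B i] ! u"
  using bit_pair_code[of A B i] by (cases u; cases "u - 1"; cases "u - 2"; auto simp: numeral_eq_Suc)

lemma t16_cases: "(t::nat) < 16 \<Longrightarrow> t = 0 \<or> t = 1 \<or> t = 2 \<or> t = 3 \<or> t = 4 \<or> t = 5 \<or> t = 6 \<or> t = 7 \<or>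
   t = 8 \<or> t = 9 \<or> t = 10 \<or> t = 11 \<or> t = 12 \<or> t = 13 \<or> t = 14 \<or> t = 15" by arith

lemma bitl_big:
  assumes "t < 16"
  shows "bitl (pair_code (s1 # pair_code A B) (s2 # pair_code C D)) (16*j+4+t) =
    [j < length A \<or> j < length B, j < length A, j < length C \<or> j < length D, j < length C,
     j < length A \<or> j < length B, bitl A j, j < length C \<or> j < length D, bitl C j,
     j < length A \<or> j < length B, j < length B, j < length C \<or> j < length D, j < length D,
     j < length A \<or> j < length B, bitl B j, j < length C \<or> j < length D, bitl D j] ! t"
proof -
  define tt where "tt = t div 4"
  define u where "u = t mod 4"
  have tt4: "tt < 4" "u < 4" using assms unfolding tt_def u_def by auto
  have e: "16*j+4+t = 4*Suc(4*j + tt) + u" unfolding tt_def u_def by simp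
  have lt: "\<And>m. (4*j+tt < 4*m) = (j < m)" using tt4 by auto
  have "bitl (pair_code (s1 # pair_code A B) (s2 # pair_code C D)) (16*j+4+t) =
    [j < length A \<or> j < length B, [j < length A, bitl A j, j < length B, bitl B j] ! tt,
     j < length C \<or> j < length D, [j < length C, bitl C j, j < length D, bitl D j] ! tt] ! u"
    unfolding e
    by (subst bitl_pc4[OF tt4(2)]) (simp add: length_pair_code lt bitl_pc4[OF tt4(1)] less_max_iff_disj)
  also have "\<dots> = [j < length A \<or> j < length B, j < length A, j < length C \<or> j < length D, j < length C,
     j < length A \<or> j < length B, bitl A j, j < length C \<or> j < length D, bitl C j,
     j < length A \<or> j < length B, j < length B, j < length C \<or> j < length D, j < length D,
     j < length A \<or> j < length B, bitl B j, j < length C \<or> j < length D, bitl D j] ! t"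
    using t16_cases[OF assms] unfolding tt_def u_def by (elim disjE) simp_all
  finally show ?thesis .
qed

lemma ival_code_fin: "ival_code (IFin r e) = pair_code ((r < 0) # pair_code (ibits r) (fbits r)) ((e < 0) # pair_code (ibits e) (fbits e))"
  by (simp add: ival_code_def dc_eq)

lemma test_ok_IWhole: "\<not> test_ok (ival_code IWhole) L"
  by (simp add: test_ok_def ival_code_def bitl_def)

lemma bitl_big1: "bitl (pair_code (s1 # pair_code A B) (s2 # pair_code C D)) (16*j+5) = (j < length A)"
proof -
  have e: "16*j+5 = 16*j+4+(1::nat)" by simp
  show ?thesis unfolding e by (rule trans[OF bitl_big]) simp_all
qed
lemma bitl_big5: "bitl (pair_code (s1 # pair_code A B) (s2 # pair_code C D)) (16*j+9) = bitl A j"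
proof -
  have e: "16*j+9 = 16*j+4+(5::nat)" by simp
  show ?thesis unfolding e by (rule trans[OF bitl_big]) simp_all
qed
lemma bitl_big13: "bitl (pair_code (s1 # pair_code A B) (s2 # pair_code C D)) (16*j+17) = bitl B j"
proof -
  have e: "16*j+17 = 16*j+4+(13::nat)" by simp
  show ?thesis unfolding e by (rule trans[OF bitl_big]) simp_all
qed
lemma bitl_big15: "bitl (pair_code (s1 # pair_code A B) (s2 # pair_code C D)) (16*j+19) = bitl D j"
proof -
  have e: "16*j+19 = 16*j+4+(15::nat)" by simp
  show ?thesis unfolding e by (rule trans[OF bitl_big]) simp_all
qed

lemma bitl_pc_0: "bitl (pair_code (s1 # X) (s2 # Y)) 0 = True"
proof -
  have e: "(0::nat) = 4*0+0" by simp
  show ?thesis by (subst e, rule trans[OF bitl_pc4]) simp_all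
qed
lemma bitl_pc_1: "bitl (pair_code (s1 # X) (s2 # Y)) 1 = s1"
proof -
  have e: "(1::nat) = 4*0+1" by simp
  show ?thesis by (subst e, rule trans[OF bitl_pc4]) simp_all
qed
lemma bitl_pc_2: "bitl (pair_code (s1 # X) (s2 # Y)) 2 = True"
proof -
  have e: "(2::nat) = 4*0+2" by simp
  show ?thesis by (subst e, rule trans[OF bitl_pc4]) simp_all
qed
lemma bitl_pc_3: "bitl (pair_code (s1 # X) (s2 # Y)) 3 = s2"
proof -
  have e: "(3::nat) = 4*0+3" by simp
  show ?thesis by (subst e, rule trans[OF bitl_pc4]) simp_all
qed
lemma bitl_pc_7: "bitl (pair_code (s1 # X) (s2 # pair_code C D)) 7 = (0 < length C)"
proof -
  have "bitl (pair_code (s1 # X) (s2 # pair_code C D)) (4*1+3) = bitl (s2 # pair_code C D) 1"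
    using bitl_pc4[of 3 "s1 # X" "s2 # pair_code C D" 1] by simp
  also have "\<dots> = bitl (pair_code C D) (4*0+0)" by (simp add: One_nat_def)
  also have "\<dots> = (0 < length C)" using bitl_pc4[of 0 C D 0] by simp
  finally show ?thesis by simp
qed

lemma test_ok_IFin:
  assumes "ival_valid (IFin r e)"
  shows "test_ok (ival_code (IFin r e)) L \<longleftrightarrow> e < 1 / 2^(L+3)"
proof -
  have e0: "0 \<le> e" "dyadic e" using assms by (auto simp: ival_valid_def)
  have "test_ok (ival_code (IFin r e)) L \<longleftrightarrow> ibits e = [] \<and> (\<forall>j<L+3. \<not> bitl (fbits e) j)"
  proof -
    have b: "bitl (ival_code (IFin r e)) (16*b+3) = bitl (fbits e) (b - 1)" if "1 \<le> b" for b
    proof -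
      have "16*b+3 = 16*(b-1)+19" using that by simp
      then show ?thesis unfolding ival_code_fin by (simp only: bitl_big15)
    qed
    have "(\<forall>b. 1 \<le> b \<and> b \<le> L+3 \<longrightarrow> \<not> bitl (ival_code (IFin r e)) (16*b+3)) \<longleftrightarrow> (\<forall>j<L+3. \<not> bitl (fbits e) j)"
    proof
      assume A: "\<forall>b. 1 \<le> b \<and> b \<le> L+3 \<longrightarrow> \<not> bitl (ival_code (IFin r e)) (16*b+3)"
      show "\<forall>j<L+3. \<not> bitl (fbits e) j"
      proof (intro allI impI)
        fix j assume "j < L+3"
        then show "\<not> bitl (fbits e) j" using A[rule_format, of "Suc j"] b[of "Suc j"] by simp
      qed
    next
      assume A: "\<forall>j<L+3. \<not> bitl (fbits e) j"
      show "\<forall>b. 1 \<le> b \<and> b \<le> L+3 \<longrightarrow> \<not> bitl (ival_code (IFin r e)) (16*b+3)"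
        using A b by auto
    qed
    then show ?thesis unfolding test_ok_def by (simp add: ival_code_fin bitl_pc_0 bitl_pc_7)
  qed
  also have "\<dots> \<longleftrightarrow> e < 1 / 2^(L+3)"
    using small_bits[of e "L+3"] bits_small[of e "L+3"] e0 by blast
  finally show ?thesis .
qed

lemma Mo_fin: "Mo (ival_code (IFin r e)) L = max (length (ibits r)) (L+4)"
  unfolding Mo_def ival_code_fin bitl_big1 by (rule Least_equality) auto

definition fbp :: "real \<Rightarrow> nat \<Rightarrow> bool list" where
  "fbp r L = map (bitl (fbits r)) [0..<L+3] @ [True]"

definition fbr :: "nat \<Rightarrow> bool list" where
  "fbr L = replicate (L - 1) False @ [True]"

definition cval :: "real \<Rightarrow> nat \<Rightarrow> real" where
  "cval r L = (if r < 0 then -1 else 1) * (real (nat \<lfloor>\<bar>r\<bar>\<rfloor>) + fval (fbp r L))"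

lemma length_fbp[simp]: "length (fbp r L) = L + 4" by (simp add: fbp_def)
lemma bitl_fbp: "bitl (fbp r L) j = ((j < L+3 \<and> bitl (fbits r) j) \<or> j = L+3)"
  by (auto simp: fbp_def bitl_def nth_append)
lemma length_fbr[simp]: "1 \<le> L \<Longrightarrow> length (fbr L) = L" by (simp add: fbr_def)
lemma bitl_fbr: "1 \<le> L \<Longrightarrow> bitl (fbr L) j = (j = L - 1)"
  by (auto simp: fbr_def bitl_def nth_append)

lemma fval_fbp_pos: "0 < fval (fbp r L)"
proof -
  have "bitl (fbp r L) (L+3)" by (simp add: bitl_fbp)
  then have "fval (fbp r L) \<ge> 1 / 2^Suc (L+3)" by (rule fval_ge_bit)
  moreover have "(0::real) < 1 / 2^Suc (L+3)" by simp
  ultimately show ?thesis by linarith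
qed

lemma dc_cval: "dyadic_code (cval r L) = (r < 0) # pair_code (ibits r) (fbp r L)"
proof -
  let ?I = "nat \<lfloor>\<bar>r\<bar>\<rfloor>" and ?F = "fval (fbp r L)"
  have F: "0 < ?F" "?F < 1" using fval_fbp_pos fval_lt1 by auto
  have ac: "\<bar>cval r L\<bar> = real ?I + ?F" unfolding cval_def using F by (auto simp: abs_mult)
  define S where "S = real ?I + ?F"
  have Spos: "0 < S" unfolding S_def using F(1) by (metis add_nonneg_pos of_nat_0_le_iff)
  have cS: "cval r L = (if r < 0 then - S else S)" by (simp add: cval_def S_def)
  have neg: "(cval r L < 0) = (r < 0)" unfolding cS using Spos by simp
  have fl: "\<lfloor>\<bar>cval r L\<bar>\<rfloor> = int ?I" unfolding ac using F by (simp add: floor_eq_iff)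
  have last: "fbp r L = [] \<or> last (fbp r L)" by (simp add: fbp_def)
  have fr: "\<bar>cval r L\<bar> - of_int \<lfloor>\<bar>cval r L\<bar>\<rfloor> = ?F" using ac fl by simp
  show ?thesis unfolding dc_eq neg fr frac_bits_fval[OF last] using fl by simp
qed

lemma fval_fbr: "1 \<le> L \<Longrightarrow> fval (fbr L) = 1 / 2^L"
proof -
  assume L: "1 \<le> L"
  have "fval (fbr L) = fval [True] / 2 ^ (L - 1)" unfolding fbr_def fval_append by simp
  also have "\<dots> = 1 / (2 * 2 ^ (L - 1))" by (simp add: fval_def)
  also have "2 * 2 ^ (L - 1) = (2::real) ^ L" using L by (metis Suc_diff_le diff_Suc_1 power_Suc)
  finally show ?thesis by simp
qed

lemma dc_rho: "1 \<le> L \<Longrightarrow> dyadic_code (1 / 2^L) = False # pair_code [] (fbr L)"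
proof -
  assume L: "1 \<le> L"
  have o: "(1::real) < 2^L" using L by (intro one_less_power) auto
  have p1: "(0::real) < 1 / 2^L" by simp
  have p2: "1 / 2^L < (1::real)" using o by (simp add: field_simps)
  note p = p1 p2
  then have fl: "\<lfloor>\<bar>1 / (2::real)^L\<bar>\<rfloor> = (0::int)" by (simp add: floor_eq_iff)
  have last: "fbr L = [] \<or> last (fbr L)" by (simp add: fbr_def)
  have "frac_bits (1 / 2^L) = fbr L" using frac_bits_fval[OF last] fval_fbr[OF L] by simp
  then show ?thesis unfolding dc_eq using p fl by simp
qed

lemma bitl_Nil: "bitl [] j = False" by (simp add: bitl_def)

lemma ml_eq:
  assumes L: "1 \<le> L"
  shows "ml (ival_code (IFin r e)) L = ival_code (IFin (cval r L) (1/2^L))"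
proof -
  let ?w = "ival_code (IFin r e)"
  let ?R = "ival_code (IFin (cval r L) (1/2^L))"
  let ?M = "max (length (ibits r)) (L+4)"
  have R: "?R = pair_code ((r < 0) # pair_code (ibits r) (fbp r L)) (False # pair_code [] (fbr L))"
    by (simp add: ival_code_def dc_cval dc_rho[OF L])
  have w: "?w = pair_code ((r < 0) # pair_code (ibits r) (fbits r)) ((e < 0) # pair_code (ibits e) (fbits e))"
    by (rule ival_code_fin)
  have Mo: "Mo ?w L = ?M" by (rule Mo_fin)
  have lml: "length (ml ?w L) = 16 * ?M + 4" using length_ml[of ?w L] Mo by simp
  have lR: "length ?R = 16 * ?M + 4" unfolding R using L by (simp add: length_pair_code)
  show ?thesis
  proof (rule list_eq_bit)
    show "\<And>i. (i < length (ml ?w L)) = (i < length ?R)" using lml lR by simp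
  next
    fix p
    show "bitl (ml ?w L) p = bitl ?R p"
    proof (cases "p < 4")
      case True
      have p4: "p = 0 \<or> p = 1 \<or> p = 2 \<or> p = 3" using True by arith
      have "bitl (ml ?w L) p = [True, bitl ?w 1, True, False] ! p"
        using p4 lml by (elim disjE) (simp_all add: bitl_def ml_def)
      also have "\<dots> = [True, r < 0, True, False] ! p" unfolding w bitl_pc_1 ..
      also have "\<dots> = bitl ?R p"
        unfolding R using p4 by (elim disjE; hypsubst; simp only: bitl_pc_0 bitl_pc_1 bitl_pc_2 bitl_pc_3; simp)
      finally show ?thesis .
    next
      case False
      define j where "j = (p - 4) div 16"
      define t where "t = (p - 4) mod 16"
      have p: "p = 16*j+4+t" unfolding j_def t_def using False by simp
      have t16: "t < 16" unfolding t_def by simp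
      show ?thesis
      proof (cases "j < ?M")
        case False
        then have "length (ml ?w L) \<le> p" "length ?R \<le> p" using lml lR p by auto
        then show ?thesis by (simp add: bitl_def)
      next
        case True
        have jM: "j < Mo ?w L" using True Mo by simp
        have lt: "16*j + t < 16 * ?M"
        proof -
          have "16*j+t < 16*(Suc j)" using t16 by simp
          also have "16 * Suc j \<le> 16 * ?M" using True by (intro mult_le_mono2) simp
          finally show ?thesis .
        qed
        have "bitl (ml ?w L) p = wv ?w L j t" using ml_nth[OF jM t16] lml p lt by (simp add: bitl_def)
        also have "\<dots> = wval t (j < length (ibits r)) (bitl (ibits r) j) (bitl (fbits r) j) (j < L) (Suc j < L) (min 5 (Suc j - L))"
          unfolding wv_def w bitl_big1 bitl_big5 bitl_big13 ..
        also have "\<dots> = bitl ?R p"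
          unfolding R p bitl_big[OF t16] wval_def using t16_cases[OF t16] L
          by (elim disjE) (auto simp: bitl_fbp bitl_fbr bitl_Nil)
        finally show ?thesis .
      qed
    qed
  qed
qed


lemma zero_by_pow:
  fixes d c :: real
  assumes "\<forall>n. \<bar>d\<bar> \<le> c / 2^n"
  shows "d = 0"
proof (rule ccontr)
  assume d: "d \<noteq> 0"
  then have dp: "0 < \<bar>d\<bar>" by simp
  show False
  proof (cases "c \<le> 0")
    case True
    then show False using assms[rule_format, of 0] dp by simp
  next
    case False
    then have cp: "0 < c" by simp
    obtain n where n: "(1/2::real)^n < \<bar>d\<bar> / c" using real_arch_pow_inv[of "\<bar>d\<bar> / c" "1/2"] dp cp by auto
    have "c / 2^n = c * (1/2)^n" by (simp add: power_one_over)
    also have "\<dots> < c * (\<bar>d\<bar> / c)" using n cp by (intro mult_strict_left_mono) auto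
    also have "\<dots> = \<bar>d\<bar>" using cp by simp
    finally show False using assms[rule_format, of n] by simp
  qed
qed

lemma dyadic_cval: "dyadic (cval r L)"
proof -
  let ?I = "nat \<lfloor>\<bar>r\<bar>\<rfloor>" and ?b = "bv (fbp r L)" and ?s = "(if r < 0 then -1 else 1) :: int"
  have f: "fval (fbp r L) = real ?b / 2^(L+4)" using bv_fval[of "fbp r L"] by simp
  have "cval r L = of_int (?s * (int ?I * 2^(L+4) + int ?b)) / 2^(L+4)"
    unfolding cval_def f by (simp add: field_simps)
  then show ?thesis unfolding dyadic_def by blast
qed

lemma map_bitl_take: "map (bitl b) [0..<k] = take k b @ replicate (k - length b) False"
  by (rule nth_equalityI) (auto simp: bitl_def nth_append min_def)

lemma cval_approx:
  assumes "dyadic r"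
  shows "\<bar>cval r L - r\<bar> \<le> 1 / 2^(L+4)"
proof -
  let ?fb = "fbits r" and ?k = "L + 3"
  let ?T = "fval (take ?k ?fb)"
  have F': "fval (fbp r L) = ?T + 1 / 2^(L+4)"
  proof -
    have "fval (fbp r L) = fval (map (bitl ?fb) [0..<?k]) + 1 / 2^(Suc ?k)"
      unfolding fbp_def by simp
    also have "fval (map (bitl ?fb) [0..<?k]) = ?T"
      unfolding map_bitl_take fval_append by simp
    finally show ?thesis by simp
  qed
  have tk: "?T \<le> fval ?fb" "fval ?fb < ?T + 1 / 2^?k" using fval_take[of ?k ?fb] by auto
  have h: "(1::real) / 2^?k = 2 * (1 / 2^(L+4))" by (simp add: eval_nat_numeral)
  have diff: "\<bar>fval (fbp r L) - fval ?fb\<bar> \<le> 1 / 2^(L+4)" using F' tk h by linarith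
  define A where "A = real (nat \<lfloor>\<bar>r\<bar>\<rfloor>)"
  have ra: "\<bar>r\<bar> = A + fval ?fb" unfolding A_def by (rule dc_abs_val[OF assms])
  have c: "cval r L = (if r < 0 then -1 else 1) * (A + fval (fbp r L))" unfolding cval_def A_def ..
  define D where "D = fval (fbp r L) - fval ?fb"
  have "cval r L - r = (if r < 0 then -1 else 1) * D"
  proof (cases "r < 0")
    case True
    then have r1: "r = - (A + fval ?fb)" using ra by linarith
    have c1: "cval r L = - (A + fval (fbp r L))" using c True by simp
    have "cval r L - r = - D" using r1 c1 D_def by linarith
    then show ?thesis using True by simp
  next
    case False
    then have r1: "r = A + fval ?fb" using ra by linarith
    have c1: "cval r L = A + fval (fbp r L)" using c False by simp
    have "cval r L - r = D" using r1 c1 D_def by linarith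
    then show ?thesis using False by simp
  qed
  then have "\<bar>cval r L - r\<bar> = \<bar>D\<bar>" by (simp add: abs_mult)
  then show ?thesis using diff unfolding D_def by simp
qed

definition rc :: "(bool list \<Rightarrow> bool list) \<Rightarrow> nat \<Rightarrow> real" where
  "rc \<phi> L = (case ival_of \<phi> (ms_of \<phi> L) of IFin r e \<Rightarrow> r | IWhole \<Rightarrow> 0)"
definition ec :: "(bool list \<Rightarrow> bool list) \<Rightarrow> nat \<Rightarrow> real" where
  "ec \<phi> L = (case ival_of \<phi> (ms_of \<phi> L) of IFin r e \<Rightarrow> e | IWhole \<Rightarrow> 0)"

lemma dyadic_pow: "dyadic (1 / 2^n)"
  unfolding dyadic_def by (intro exI[of _ 1] exI[of _ n]) simp

context
  fixes \<phi> :: "bool list \<Rightarrow> bool list" and x :: real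
  assumes nm: "Ri_name \<phi> x"
begin

lemma nm_valid: "ival_valid (ival_of \<phi> n)" and nm_code: "\<phi> (nat_code n) = ival_code (ival_of \<phi> n)"
proof -
  obtain J where J: "ival_valid J" "\<phi> (nat_code n) = ival_code J" using nm unfolding Ri_name_def by blast
  then have "ival_of \<phi> n = J" by (rule ival_of_eq)
  then show "ival_valid (ival_of \<phi> n)" "\<phi> (nat_code n) = ival_code (ival_of \<phi> n)" using J by auto
qed

lemma nm_nested: "n \<le> m \<Longrightarrow> ival_set (ival_of \<phi> m) \<subseteq> ival_set (ival_of \<phi> n)"
proof -
  assume "n \<le> m"
  have "\<And>k. ival_set (ival_of \<phi> (Suc k)) \<subseteq> ival_set (ival_of \<phi> k)" using nm unfolding Ri_name_def by blast
  then show ?thesis using lift_Suc_antimono_le[of "\<lambda>k. ival_set (ival_of \<phi> k)"] \<open>n \<le> m\<close> by blast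
qed

lemma nm_inter: "(\<Inter>n. ival_set (ival_of \<phi> n)) = {x}" using nm unfolding Ri_name_def by blast

lemma nm_mem: "x \<in> ival_set (ival_of \<phi> n)" using nm_inter by blast

lemma nm_xi: "Ri_xi \<phi> = x"
  unfolding Ri_xi_def
proof (rule the_equality)
  show "Ri_name \<phi> x" by (rule nm)
  fix y assume "Ri_name \<phi> y"
  then have "(\<Inter>n. ival_set (ival_of \<phi> n)) = {y}" unfolding Ri_name_def by blast
  then show "y = x" using nm_inter by blast
qed

lemma pt_in:
  assumes "x \<in> ival_set J" "\<not> ival_diam_le J \<epsilon>" "0 < \<epsilon>"
  shows "x + \<epsilon>/2 \<in> ival_set J \<or> x - \<epsilon>/2 \<in> ival_set J"
proof (cases J)
  case (IFin r e)
  then show ?thesis using assms by (auto simp: ival_set_def ival_diam_le_def)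
next
  case IWhole then show ?thesis by (simp add: ival_set_def)
qed

lemma nm_shrink: "0 < \<epsilon> \<Longrightarrow> \<exists>N. ival_diam_le (ival_of \<phi> N) \<epsilon>"
proof (rule ccontr)
  assume e: "0 < \<epsilon>" and "\<not> (\<exists>N. ival_diam_le (ival_of \<phi> N) \<epsilon>)"
  then have nd: "\<And>N. \<not> ival_diam_le (ival_of \<phi> N) \<epsilon>" by blast
  let ?S = "\<lambda>N. ival_set (ival_of \<phi> N)"
  have both: "\<And>N. x + \<epsilon>/2 \<in> ?S N \<or> x - \<epsilon>/2 \<in> ?S N" using pt_in[OF nm_mem nd e] by blast
  have "\<exists>y. y \<noteq> x \<and> (\<forall>N. y \<in> ?S N)"
  proof (cases "\<forall>N. x + \<epsilon>/2 \<in> ?S N")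
    case True then show ?thesis using e by (intro exI[of _ "x + \<epsilon>/2"]) auto
  next
    case False
    then obtain N0 where N0: "x + \<epsilon>/2 \<notin> ?S N0" by blast
    have "x - \<epsilon>/2 \<in> ?S N" for N
    proof (cases "N0 \<le> N")
      case True
      then have "x + \<epsilon>/2 \<notin> ?S N" using N0 nm_nested by blast
      then show ?thesis using both by blast
    next
      case False
      then have "x - \<epsilon>/2 \<in> ?S N0" using N0 both by blast
      then show ?thesis using nm_nested[of N N0] False by auto
    qed
    then show ?thesis using e by (intro exI[of _ "x - \<epsilon>/2"]) auto
  qed
  then show False using nm_inter by blast
qed

lemma nm_ex_test: "\<exists>m. test_ok (\<phi> (nat_code m)) L"
proof -
  obtain N where N: "ival_diam_le (ival_of \<phi> N) (1 / 2^(L+4))" using nm_shrink[of "1/2^(L+4)"] by auto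
  then obtain r e where J: "ival_of \<phi> N = IFin r e" "2 * e \<le> 1 / 2^(L+4)"
    by (cases "ival_of \<phi> N") (auto simp: ival_diam_le_def)
  have "e < 1 / 2^(L+3)"
  proof -
    have "0 \<le> e" using nm_valid[of N] J by (simp add: ival_valid_def)
    have "(2::real)^(L+4) = 2 * 2^(L+3)" by (simp add: eval_nat_numeral)
    then have "(1::real) / 2^(L+4) = (1/2^(L+3)) / 2" by simp
    then have h: "2 * e \<le> (1/2^(L+3)) / 2" using J(2) by simp
    define q where "q = (1::real)/2^(L+3)"
    have "0 < q" unfolding q_def by simp
    moreover have "2 * e \<le> q / 2" using h unfolding q_def .
    ultimately have "e < q" using \<open>0 \<le> e\<close> by linarith
    then show ?thesis unfolding q_def .
  qed
  then have "test_ok (\<phi> (nat_code N)) L" using test_ok_IFin nm_valid[of N] J nm_code[of N] by simp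
  then show ?thesis by blast
qed

lemma out_fin: "ival_of \<phi> (ms_of \<phi> L) = IFin (rc \<phi> L) (ec \<phi> L) \<and> ec \<phi> L < 1/2^(L+3)"
proof -
  let ?m = "ms_of \<phi> L"
  have ok: "test_ok (\<phi> (nat_code ?m)) L" unfolding ms_of_def by (rule LeastI_ex[OF nm_ex_test])
  show ?thesis
  proof (cases "ival_of \<phi> ?m")
    case (IFin r e)
    then have "e < 1/2^(L+3)" using ok nm_code[of ?m] test_ok_IFin nm_valid[of ?m] by simp
    then show ?thesis using IFin by (simp add: rc_def ec_def)
  next
    case IWhole
    then show ?thesis using ok nm_code[of ?m] test_ok_IWhole by simp
  qed
qed

lemma out_eq: "1 \<le> length a \<Longrightarrow> otm_out \<phi> Mc a = ival_code (IFin (cval (rc \<phi> (length a)) (length a)) (1/2^(length a)))"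
proof -
  assume L: "1 \<le> length a"
  let ?L = "length a"
  have "otm_out \<phi> Mc a = ml (\<phi> (nat_code (ms_of \<phi> ?L))) ?L" by (rule machine(3)[OF nm_ex_test])
  also have "\<phi> (nat_code (ms_of \<phi> ?L)) = ival_code (IFin (rc \<phi> ?L) (ec \<phi> ?L))"
    using nm_code out_fin by simp
  finally show ?thesis using ml_eq[OF L] by simp
qed

lemma out_approx: "\<bar>cval (rc \<phi> L) L - x\<bar> < 1/2^(L+2)"
proof -
  have v: "ival_valid (IFin (rc \<phi> L) (ec \<phi> L))" using nm_valid out_fin by metis
  have a1: "\<bar>cval (rc \<phi> L) L - rc \<phi> L\<bar> \<le> 1/2^(L+4)" using v by (intro cval_approx) (simp add: ival_valid_def)
  have "x \<in> ival_set (IFin (rc \<phi> L) (ec \<phi> L))" using nm_mem out_fin by metis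
  then have i: "rc \<phi> L - ec \<phi> L \<le> x" "x \<le> rc \<phi> L + ec \<phi> L" by (auto simp: ival_set_def)
  have ecb: "ec \<phi> L < 1/2^(L+3)" using out_fin by blast
  have a2: "\<bar>rc \<phi> L - x\<bar> < 1/2^(L+3)" using i ecb by (simp add: abs_less_iff)
  define q where "q = (1::real)/2^(L+4)"
  have q: "0 < q" "1/2^(L+3) = 2*q" "1/2^(L+2) = 4*q" unfolding q_def by (simp_all add: eval_nat_numeral)
  show ?thesis using a1 a2 q unfolding q_def[symmetric] by linarith
qed

end


lemma diam_pow_le: "(1/2::real)^n = 1/2^n" by (simp add: power_one_over)

context
  fixes \<phi> :: "bool list \<Rightarrow> bool list" and x :: real
  assumes nm: "Ri_name \<phi> x"
begin

abbreviation "psi \<equiv> otm_out \<phi> Mc"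
definition Cn :: "nat \<Rightarrow> real" where "Cn n = cval (rc \<phi> (n+2)) (n+2)"

lemma psi_code: "psi (nat_code n) = ival_code (IFin (Cn n) (1/2^(n+2)))"
  using out_eq[OF nm, of "nat_code n"] by (simp add: length_nat_code Cn_def)

lemma psi_valid: "ival_valid (IFin (Cn n) (1/2^(n+2)))"
  unfolding ival_valid_def Cn_def ival.case by (intro conjI dyadic_cval dyadic_pow) simp

lemma psi_of: "ival_of psi n = IFin (Cn n) (1/2^(n+2))"
  using ival_of_eq[where J="IFin (Cn n) (1/2^(n+2))" and \<phi>=psi and n=n] psi_valid[of n] psi_code[of n] by blast

lemma Cn_approx: "\<bar>Cn n - x\<bar> < 1/2^(n+4)"
proof -
  have e: "n+2+2 = n+(4::nat)" by simp
  show ?thesis using out_approx[OF nm, of "n+2", unfolded e] unfolding Cn_def .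
qed

lemma psi_set: "ival_set (ival_of psi n) = {Cn n - 1/2^(n+2) .. Cn n + 1/2^(n+2)}"
  unfolding psi_of ival_set_def ival.case ..

lemma psi_name: "Ri_name psi x"
  unfolding Ri_name_def
proof (intro conjI allI)
  fix n
  show "\<exists>J. ival_valid J \<and> psi (nat_code n) = ival_code J" using psi_valid psi_code by blast
next
  fix n
  show "ival_set (ival_of psi (Suc n)) \<subseteq> ival_set (ival_of psi n)"
  proof
    fix y assume "y \<in> ival_set (ival_of psi (Suc n))"
    then have y: "Cn (Suc n) - 1/2^(Suc n+2) \<le> y" "y \<le> Cn (Suc n) + 1/2^(Suc n+2)" unfolding psi_set by auto
    have a1: "\<bar>Cn (Suc n) - x\<bar> < 1/2^(Suc n+4)" by (rule Cn_approx)
    have a0: "\<bar>Cn n - x\<bar> < 1/2^(n+4)" by (rule Cn_approx)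
    define q where "q = (1::real)/2^(n+5)"
    have q: "0 < q" "1/2^(n+4) = 2*q" "1/2^(Suc n+2) = 4*q" "1/2^(n+2) = 8*q" "1/2^(Suc n+4) = q"
      unfolding q_def by (simp_all add: eval_nat_numeral)
    have "Cn n - 1/2^(n+2) \<le> y \<and> y \<le> Cn n + 1/2^(n+2)"
      using y a1 a0 q(1) unfolding q by (simp add: abs_less_iff; linarith)
    then show "y \<in> ival_set (ival_of psi n)" unfolding psi_set by simp
  qed
next
  show "(\<Inter>n. ival_set (ival_of psi n)) = {x}"
  proof (intro equalityI subsetI)
    fix y assume "y \<in> (\<Inter>n. ival_set (ival_of psi n))"
    then have yin: "\<And>n. y \<in> ival_set (ival_of psi n)" by blast
    have "\<forall>n. \<bar>y - x\<bar> \<le> 1 / 2^n"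
    proof
      fix n
      have y: "Cn n - 1/2^(n+2) \<le> y" "y \<le> Cn n + 1/2^(n+2)" using yin[of n] unfolding psi_set by auto
      have a0: "\<bar>Cn n - x\<bar> < 1/2^(n+4)" by (rule Cn_approx)
      define q where "q = (1::real)/2^(n+4)"
      have q: "1/2^(n+4) = q" "1/2^(n+2) = 4*q" "1/2^n = 16*q" unfolding q_def by (simp_all add: eval_nat_numeral)
      have q0: "0 < q" unfolding q_def by simp
      show "\<bar>y - x\<bar> \<le> 1 / 2^n" using y a0 q0 unfolding q by (simp add: abs_less_iff abs_le_iff; linarith)
    qed
    then have "y - x = 0" by (rule zero_by_pow)
    then show "y \<in> {x}" by simp
  next
    fix y assume "y \<in> {x}"
    then have yx: "y = x" by simp
    show "y \<in> (\<Inter>n. ival_set (ival_of psi n))"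
    proof (rule INT_I)
      fix n :: nat
      have a0: "\<bar>Cn n - x\<bar> < 1/2^(n+4)" by (rule Cn_approx)
      have "(2::real)^(n+2) \<le> 2^(n+4)" by (rule power_increasing) simp_all
      then have "(1::real)/2^(n+4) \<le> 1/2^(n+2)" by (intro divide_left_mono) simp_all
      then show "y \<in> ival_set (ival_of psi n)" unfolding yx psi_set using a0 by (simp add: abs_less_iff)
    qed
  qed
qed

lemma diam_test: "ival_diam_le (ival_of \<phi> N) (1 / 2^(L+4)) \<Longrightarrow> test_ok (\<phi> (nat_code N)) L"
proof -
  assume N: "ival_diam_le (ival_of \<phi> N) (1 / 2^(L+4))"
  then obtain r e where J: "ival_of \<phi> N = IFin r e" "2 * e \<le> 1 / 2^(L+4)"
    by (cases "ival_of \<phi> N") (auto simp: ival_diam_le_def)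
  have "e < 1 / 2^(L+3)"
  proof -
    have "0 \<le> e" using nm_valid[OF nm, of N] J by (simp add: ival_valid_def)
    define q where "q = (1::real)/2^(L+4)"
    have q: "0 < q" "1/2^(L+3) = 2*q" unfolding q_def by (simp_all add: eval_nat_numeral)
    show ?thesis using J(2) q \<open>0 \<le> e\<close> unfolding q_def[symmetric] by linarith
  qed
  then show "test_ok (\<phi> (nat_code N)) L" using test_ok_IFin nm_valid[OF nm, of N] J nm_code[OF nm, of N] by simp
qed

lemma least_ex: "\<exists>N. ival_diam_le (ival_of \<phi> N) ((1/2)^n)"
  by (rule nm_shrink[OF nm]) simp

lemma ms_bound: "ms_of \<phi> L \<le> Ri_mu \<phi> (L+4)"
proof -
  let ?N0 = "LEAST N. ival_diam_le (ival_of \<phi> N) ((1/2)^(L+4))"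
  have "ival_diam_le (ival_of \<phi> ?N0) ((1/2)^(L+4))" by (rule LeastI_ex[OF least_ex])
  then have "test_ok (\<phi> (nat_code ?N0)) L" using diam_test by (simp add: diam_pow_le)
  then have "ms_of \<phi> L \<le> ?N0" unfolding ms_of_def by (rule Least_le)
  then show ?thesis unfolding Ri_mu_def by simp
qed

lemma log_bound: "\<bar>x\<bar> + 1 \<le> 2 ^ nat \<lceil>log 2 (\<bar>x\<bar> + 1)\<rceil>"
proof -
  let ?l = "log 2 (\<bar>x\<bar> + 1)"
  have l0: "0 \<le> ?l" by simp
  have "?l \<le> real (nat \<lceil>?l\<rceil>)" using l0 by linarith
  then have "(2::real) powr ?l \<le> 2 powr real (nat \<lceil>?l\<rceil>)" by (rule powr_mono) simp
  moreover have "(2::real) powr real (nat \<lceil>?l\<rceil>) = 2 ^ nat \<lceil>?l\<rceil>" by (rule powr_realpow) simp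
  moreover have "(2::real) powr ?l = \<bar>x\<bar> + 1" by simp
  ultimately show ?thesis by simp
qed

lemma ibits_bound: "length (ibits (rc \<phi> L)) \<le> Ri_mu \<phi> 0"
proof -
  let ?T = "nat \<lceil>log 2 (\<bar>x\<bar> + 1)\<rceil>"
  let ?r = "rc \<phi> L"
  have of: "ival_of \<phi> (ms_of \<phi> L) = IFin ?r (ec \<phi> L)" "ec \<phi> L < 1/2^(L+3)" using out_fin[OF nm] by auto
  have "x \<in> ival_set (IFin ?r (ec \<phi> L))" using nm_mem[OF nm] of(1) by metis
  then have i: "?r - ec \<phi> L \<le> x" "x \<le> ?r + ec \<phi> L" by (auto simp: ival_set_def)
  have o1: "(1::real)/2^(L+3) \<le> 1" by simp
  have ax: "x \<le> \<bar>x\<bar>" "- x \<le> \<bar>x\<bar>" by auto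
  have "?r < \<bar>x\<bar> + 1" "- ?r < \<bar>x\<bar> + 1" using o1 ax i of(2) by linarith+
  then have "\<bar>?r\<bar> < \<bar>x\<bar> + 1" by (simp add: abs_less_iff)
  also have "\<dots> \<le> 2 ^ ?T" by (rule log_bound)
  finally have "real (nat \<lfloor>\<bar>?r\<bar>\<rfloor>) < 2 ^ ?T" by linarith
  then have "nat \<lfloor>\<bar>?r\<bar>\<rfloor> < 2 ^ ?T" by (metis of_nat_less_iff of_nat_numeral of_nat_power)
  then have "length (ibits ?r) \<le> ?T" by (rule bin_length_gt)
  also have "?T \<le> Ri_mu \<phi> 0" unfolding Ri_mu_def nm_xi[OF nm] by simp
  finally show ?thesis .
qed

lemma time_bound: "otm_time \<phi> Mc a \<le> 2*length a+5 + (Ri_mu \<phi> (length a+4)+1)*(17*length a+110) + (33 * (Ri_mu \<phi> 0 + length a + 4) + 30)"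
proof -
  let ?L = "length a"
  have t: "otm_time \<phi> Mc a \<le> 2*?L+5 + (ms_of \<phi> ?L+1)*(17*?L+110) + (33 * Mo (\<phi> (nat_code (ms_of \<phi> ?L))) ?L + 30)"
    by (rule machine(2)[OF nm_ex_test[OF nm]])
  have "\<phi> (nat_code (ms_of \<phi> ?L)) = ival_code (IFin (rc \<phi> ?L) (ec \<phi> ?L))"
    using nm_code[OF nm] out_fin[OF nm] by simp
  then have "Mo (\<phi> (nat_code (ms_of \<phi> ?L))) ?L = max (length (ibits (rc \<phi> ?L))) (?L+4)" by (simp add: Mo_fin)
  also have "\<dots> \<le> Ri_mu \<phi> 0 + ?L + 4" using ibits_bound[of ?L] by simp
  finally have m: "Mo (\<phi> (nat_code (ms_of \<phi> ?L))) ?L \<le> Ri_mu \<phi> 0 + ?L + 4" .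
  have X: "(ms_of \<phi> ?L+1)*(17*?L+110) \<le> (Ri_mu \<phi> (?L+4)+1)*(17*?L+110)"
    using ms_bound[of ?L] by (intro mult_le_mono1) simp
  have "2*?L+5 + (ms_of \<phi> ?L+1)*(17*?L+110) + (33 * Mo (\<phi> (nat_code (ms_of \<phi> ?L))) ?L + 30)
     \<le> 2*?L+5 + (Ri_mu \<phi> (?L+4)+1)*(17*?L+110) + (33 * (Ri_mu \<phi> 0 + ?L + 4) + 30)"
    using X m by (intro add_mono order_refl) simp_all
  then show ?thesis using t by (rule order_trans[rotated])
qed

lemma mono_mu: "mono (Ri_mu \<phi>)"
proof (rule monoI)
  fix n m :: nat assume nm': "n \<le> m"
  let ?Nm = "LEAST N. ival_diam_le (ival_of \<phi> N) ((1/2)^m)"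
  have "ival_diam_le (ival_of \<phi> ?Nm) ((1/2)^m)" by (rule LeastI_ex[OF least_ex])
  moreover have "(1/2::real)^m \<le> (1/2)^n" using nm' by (rule power_decreasing) auto
  ultimately have "ival_diam_le (ival_of \<phi> ?Nm) ((1/2)^n)"
  proof (cases "ival_of \<phi> ?Nm")
    case (IFin r e)
    assume a: "ival_diam_le (ival_of \<phi> ?Nm) ((1/2)^m)" and pw: "(1/2::real)^m \<le> (1/2)^n"
    then have "2 * e \<le> (1/2)^m" using IFin by (simp add: ival_diam_le_def)
    then have "2 * e \<le> (1/2)^n" using pw by (rule order_trans)
    then show ?thesis using IFin by (simp add: ival_diam_le_def)
  qed (simp add: ival_diam_le_def)
  then have "(LEAST N. ival_diam_le (ival_of \<phi> N) ((1/2)^n)) \<le> ?Nm" by (rule Least_le)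
  then show "Ri_mu \<phi> n \<le> Ri_mu \<phi> m" unfolding Ri_mu_def by simp
qed

lemma psi_mu: "Ri_mu psi n \<le> n + Ri_mu \<phi> 0"
proof -
  have "ival_diam_le (ival_of psi n) ((1/2)^n)"
  proof -
    have "(2::real) * (1/2^(n+2)) \<le> 1/2^n" by (simp add: eval_nat_numeral field_simps)
    then show ?thesis by (simp add: psi_of ival_diam_le_def diam_pow_le)
  qed
  then have "(LEAST N. ival_diam_le (ival_of psi N) ((1/2)^n)) \<le> n" by (rule Least_le)
  moreover have "Ri_xi psi = x" by (rule nm_xi[OF psi_name])
  ultimately show ?thesis unfolding Ri_mu_def nm_xi[OF nm] by simp
qed

end


definition Jx :: "real \<Rightarrow> nat \<Rightarrow> ival" where
  "Jx x n = IFin (of_int \<lfloor>x * 2^n\<rfloor> / 2^n) (1 / 2^n)"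

definition phx :: "real \<Rightarrow> bool list \<Rightarrow> bool list" where
  "phx x w = ival_code (Jx x (LEAST n. nat_code n = w))"

lemma phx_code: "phx x (nat_code n) = ival_code (Jx x n)"
proof -
  have "(LEAST m. nat_code m = nat_code n) = n"
    by (rule Least_equality) (auto dest: nat_code_inj)
  then show ?thesis by (simp add: phx_def)
qed

lemma Jx_valid: "ival_valid (Jx x n)"
  unfolding Jx_def ival_valid_def ival.case
proof (intro conjI)
  show "dyadic (real_of_int \<lfloor>x * 2 ^ n\<rfloor> / 2 ^ n)" unfolding dyadic_def by blast
qed (simp_all add: dyadic_pow)

lemma phx_of: "ival_of (phx x) n = Jx x n"
  using ival_of_eq[where J="Jx x n" and \<phi>="phx x" and n=n] Jx_valid phx_code by blast

definition cx :: "real \<Rightarrow> nat \<Rightarrow> real" where "cx x n = of_int \<lfloor>x * 2^n\<rfloor> / 2^n"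

lemma Jx_set: "ival_set (Jx x n) = {cx x n - 1/2^n .. cx x n + 1/2^n}"
  by (simp add: Jx_def ival_set_def cx_def)

lemma cx_x: "cx x n \<le> x" "x < cx x n + 1/2^n"
proof -
  let ?p = "(2::real)^n"
  have p: "0 < ?p" by simp
  have f: "of_int \<lfloor>x * ?p\<rfloor> \<le> x * ?p" "x * ?p < of_int \<lfloor>x * ?p\<rfloor> + 1" by linarith+
  show "cx x n \<le> x" unfolding cx_def using f(1) p by (simp add: pos_divide_le_eq)
  have "x < (of_int \<lfloor>x * ?p\<rfloor> + 1) / ?p" using f(2) p by (simp add: pos_less_divide_eq)
  then show "x < cx x n + 1/2^n" unfolding cx_def by (simp add: add_divide_distrib)
qed

lemma cx_step: "cx x n \<le> cx x (Suc n) \<and> cx x (Suc n) \<le> cx x n + 1/2^(Suc n)"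
proof -
  let ?p = "(2::real)^n"
  define A where "A = \<lfloor>x * ?p\<rfloor>"
  define B where "B = \<lfloor>x * (2 * ?p)\<rfloor>"
  have AB1: "2 * A \<le> B" unfolding A_def B_def
    by (simp add: le_floor_iff)
  have AB2: "B \<le> 2 * A + 1"
  proof -
    have "x * ?p < of_int A + 1" unfolding A_def by linarith
    then have "x * (2 * ?p) < of_int (2 * A + 2)" by simp
    then have "B < 2 * A + 2" unfolding B_def by (simp add: floor_less_iff)
    then show ?thesis by simp
  qed
  have c1: "cx x (Suc n) = of_int B / (2 * ?p)" unfolding cx_def B_def by (simp add: mult.commute mult.left_commute)
  have c0: "cx x n = of_int (2 * A) / (2 * ?p)" unfolding cx_def A_def by simp
  have "cx x (Suc n) - cx x n = of_int (B - 2 * A) / (2 * ?p)" unfolding c1 c0 by (simp add: diff_divide_distrib)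
  moreover have "0 \<le> of_int (B - 2 * A) / (2 * ?p)" using AB1 by simp
  moreover have "of_int (B - 2 * A) / (2 * ?p) \<le> 1 / (2 * ?p)" using AB2 by (intro divide_right_mono) simp_all
  ultimately show ?thesis by simp
qed

lemma phx_name: "Ri_name (phx x) x"
  unfolding Ri_name_def
proof (intro conjI allI)
  fix n show "\<exists>J. ival_valid J \<and> phx x (nat_code n) = ival_code J" using Jx_valid phx_code by blast
next
  fix n
  have s: "cx x n \<le> cx x (Suc n)" "cx x (Suc n) \<le> cx x n + 1/2^(Suc n)" using cx_step by auto
  have h: "(1::real)/2^n = 2 * (1/2^(Suc n))" by simp
  show "ival_set (ival_of (phx x) (Suc n)) \<subseteq> ival_set (ival_of (phx x) n)"
    unfolding phx_of Jx_set using s h by auto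
next
  show "(\<Inter>n. ival_set (ival_of (phx x) n)) = {x}"
  proof (intro equalityI subsetI)
    fix y assume "y \<in> (\<Inter>n. ival_set (ival_of (phx x) n))"
    then have yin: "\<And>n. y \<in> ival_set (Jx x n)" unfolding phx_of by blast
    have "\<forall>n. \<bar>y - x\<bar> \<le> 2 / 2^n"
    proof
      fix n
      have "cx x n - 1/2^n \<le> y" "y \<le> cx x n + 1/2^n" using yin[of n] unfolding Jx_set by auto
      moreover have "cx x n \<le> x" "x < cx x n + 1/2^n" by (rule cx_x)+
      moreover have "(2::real)/2^n = 1/2^n + 1/2^n" by simp
      ultimately show "\<bar>y - x\<bar> \<le> 2 / 2^n" by (simp add: abs_le_iff; linarith)
    qed
    then have "y - x = 0" by (rule zero_by_pow)
    then show "y \<in> {x}" by simp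
  next
    fix y assume "y \<in> {x}"
    then have yx: "y = x" by simp
    show "y \<in> (\<Inter>n. ival_set (ival_of (phx x) n))"
    proof (rule INT_I)
      fix n :: nat
      have "cx x n \<le> x" "x < cx x n + 1/2^n" by (rule cx_x)+
      moreover have "(0::real) < 1/2^n" by simp
      ultimately show "y \<in> ival_set (ival_of (phx x) n)" unfolding yx phx_of Jx_set by simp
    qed
  qed
qed

definition Pb :: "(nat \<Rightarrow> nat) \<Rightarrow> nat \<Rightarrow> nat" where
  "Pb l n = 2*n+5 + (l (n+4)+1)*(17*n+110) + (33 * (l 0 + n + 4) + 30)"

definition Qb :: "(nat \<Rightarrow> nat) \<Rightarrow> nat \<Rightarrow> nat" where
  "Qb l n = n + l 0"

lemma Pb_sopoly: "Pb \<in> sopoly"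
proof -
  have a1: "(\<lambda>l n. poly [:5,2:] n) \<in> sopoly" by (rule sop_poly)
  have a2: "(\<lambda>l n. poly [:4,1:] n) \<in> sopoly" by (rule sop_poly)
  have a3: "(\<lambda>l n. l (poly [:4,1:] n)) \<in> sopoly" using sop_app[OF a2] .
  have a4: "(\<lambda>l n. poly [:1:] n) \<in> sopoly" by (rule sop_poly)
  have a5: "(\<lambda>l n. l (poly [:4,1:] n) + poly [:1:] n) \<in> sopoly" using sop_add[OF a3 a4] .
  have a6: "(\<lambda>l n. poly [:110,17:] n) \<in> sopoly" by (rule sop_poly)
  have a7: "(\<lambda>l n. (l (poly [:4,1:] n) + poly [:1:] n) * poly [:110,17:] n) \<in> sopoly" using sop_mult[OF a5 a6] .
  have a8: "(\<lambda>l n. poly [:5,2:] n + (l (poly [:4,1:] n) + poly [:1:] n) * poly [:110,17:] n) \<in> sopoly" using sop_add[OF a1 a7] .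
  have b0: "(\<lambda>l n. poly 0 n) \<in> sopoly" by (rule sop_poly)
  have b1: "(\<lambda>l n. l (poly 0 n)) \<in> sopoly" using sop_app[OF b0] .
  have b2: "(\<lambda>l n. l (poly 0 n) + poly [:4,1:] n) \<in> sopoly" using sop_add[OF b1 a2] .
  have b3: "(\<lambda>l n. poly [:33:] n) \<in> sopoly" by (rule sop_poly)
  have b4: "(\<lambda>l n. poly [:33:] n * (l (poly 0 n) + poly [:4,1:] n)) \<in> sopoly" using sop_mult[OF b3 b2] .
  have b5: "(\<lambda>l n. poly [:30:] n) \<in> sopoly" by (rule sop_poly)
  have b6: "(\<lambda>l n. poly [:33:] n * (l (poly 0 n) + poly [:4,1:] n) + poly [:30:] n) \<in> sopoly" using sop_add[OF b4 b5] .
  have c: "(\<lambda>l n. (poly [:5,2:] n + (l (poly [:4,1:] n) + poly [:1:] n) * poly [:110,17:] n) +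
      (poly [:33:] n * (l (poly 0 n) + poly [:4,1:] n) + poly [:30:] n)) \<in> sopoly" using sop_add[OF a8 b6] .
  have "(\<lambda>l n. (poly [:5,2:] n + (l (poly [:4,1:] n) + poly [:1:] n) * poly [:110,17:] n) +
      (poly [:33:] n * (l (poly 0 n) + poly [:4,1:] n) + poly [:30:] n)) = Pb"
    by (auto simp: fun_eq_iff Pb_def algebra_simps)
  then show ?thesis using c by simp
qed

lemma Qb_sopoly: "Qb \<in> sopoly"
proof -
  have a1: "(\<lambda>l n. poly [:0,1:] n) \<in> sopoly" by (rule sop_poly)
  have b0: "(\<lambda>l n. poly 0 n) \<in> sopoly" by (rule sop_poly)
  have b1: "(\<lambda>l n. l (poly 0 n)) \<in> sopoly" using sop_app[OF b0] .
  have c: "(\<lambda>l n. poly [:0,1:] n + l (poly 0 n)) \<in> sopoly" using sop_add[OF a1 b1] .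
  have "(\<lambda>l n. poly [:0,1:] n + l (poly 0 n)) = Qb" by (auto simp: fun_eq_iff Qb_def)
  then show ?thesis using c by simp
qed

theorem mainTheorem3:
  shows "(\<forall>\<phi>\<in>Ri_dom. \<forall>n. \<exists>N. ival_diam_le (ival_of \<phi> N) ((1/2) ^ n))
         \<and> parametrised_space Ri_dom Ri_xi Ri_mu"
proof (intro conjI ballI allI)
  fix \<phi> n assume "\<phi> \<in> Ri_dom"
  then obtain x where nm: "Ri_name \<phi> x" unfolding Ri_dom_def by blast
  show "\<exists>N. ival_diam_le (ival_of \<phi> N) ((1/2) ^ n)" by (rule least_ex[OF nm])
next
  show "parametrised_space Ri_dom Ri_xi Ri_mu"
    unfolding parametrised_space_def
  proof (intro conjI)
    show "preparametrised_space Ri_dom Ri_xi Ri_mu"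
      unfolding preparametrised_space_def
    proof (intro conjI ballI)
      show "Ri_xi ` Ri_dom = UNIV"
      proof (intro equalityI subsetI)
        fix x :: real
        have "phx x \<in> Ri_dom" using phx_name unfolding Ri_dom_def by blast
        moreover have "Ri_xi (phx x) = x" by (rule nm_xi[OF phx_name])
        ultimately show "x \<in> Ri_xi ` Ri_dom" by (metis image_eqI)
      qed simp
    next
      fix \<phi> assume "\<phi> \<in> Ri_dom"
      then obtain x where nm: "Ri_name \<phi> x" unfolding Ri_dom_def by blast
      show "mono (Ri_mu \<phi>)" by (rule mono_mu[OF nm])
    qed
  next
    show "poly_time_computable Ri_dom Ri_xi Ri_mu Ri_dom Ri_xi Ri_mu id"
      unfolding poly_time_computable_def
    proof (intro exI conjI ballI allI)
      show "otm_wf Mc" by (rule Mc_wf)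
      show "Pb \<in> sopoly" by (rule Pb_sopoly)
      show "Qb \<in> sopoly" by (rule Qb_sopoly)
    next
      fix \<phi> assume "\<phi> \<in> Ri_dom"
      then obtain x where nm: "Ri_name \<phi> x" unfolding Ri_dom_def by blast
      show "otm_total \<phi> Mc" unfolding otm_total_def
        using machine(1)[OF nm_ex_test[OF nm]] by blast
    next
      fix \<phi> assume "\<phi> \<in> Ri_dom"
      then obtain x where nm: "Ri_name \<phi> x" unfolding Ri_dom_def by blast
      show "otm_out \<phi> Mc \<in> Ri_dom" using psi_name[OF nm] unfolding Ri_dom_def by blast
    next
      fix \<phi> assume "\<phi> \<in> Ri_dom"
      then obtain x where nm: "Ri_name \<phi> x" unfolding Ri_dom_def by blast
      show "Ri_xi (otm_out \<phi> Mc) = id (Ri_xi \<phi>)" using nm_xi[OF psi_name[OF nm]] nm_xi[OF nm] by simp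
    next
      fix \<phi> a assume "\<phi> \<in> Ri_dom"
      then obtain x where nm: "Ri_name \<phi> x" unfolding Ri_dom_def by blast
      show "otm_time \<phi> Mc a \<le> Pb (Ri_mu \<phi>) (length a)" using time_bound[OF nm, of a] by (simp add: Pb_def)
    next
      fix \<phi> n assume "\<phi> \<in> Ri_dom"
      then obtain x where nm: "Ri_name \<phi> x" unfolding Ri_dom_def by blast
      show "Ri_mu (otm_out \<phi> Mc) n \<le> Qb (Ri_mu \<phi>) n" using psi_mu[OF nm, of n] by (simp add: Qb_def)
    qed
  qed
qed


end
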